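(* Let $F$ be a $4$-regular graph, let $P$ be a circuit partition of $F$, let $D$ be a directed version of $\mathrm{Tch}(P)$, and let $B$ be a strictly fundamental cycle basis of $F$. Then $\mathrm{CM}(\mathrm{Tch}(P),\pi_P(B),D)$ is totally unimodular.
   Context: Graphs: $G=(V,H,E,\epsilon)$ with finite sets of vertices $V$ and half-edges $H$, a partition $E$ of $H$ into unordered pairs (edges), and $\epsilon:H\to V$; loops and multiple edges allowed. A directed version orders each edge as (tail, head). A single transition is an unordered pair of distinct half-edges incident with a common vertex; a directed single transition is such an ordered pair. A closed walk is a sequence $((h_1,h_2),\dots,(h_{n-1},h_n))$ of directed single transitions with $\{h_2,h_3\},\{h_4,h_5\},\dots,\{h_n,h_1\}$ edges, up to cyclic shift. $\sigma(D,W)\in\mathbb Z^{E}$ counts, at each edge, traversals by $W$ along its direction in $D$ minus traversals against it. An oriented circuit is a nonempty closed walk in which each half-edge occurs at most once; a circuit is one with orientation forgotten. For a maximal forest $T$ of $G$ and an edge $e\notin T$, the fundamental circuit of $e$ is the unique circuit whose only edge outside $T$ is $e$; a strictly fundamental cycle basis w.r.t. $T$ is the set of these fundamental circuits, each given an arbitrary orientation. For a (multi)set $\Gamma$ of closed walks, $\mathrm{CM}(G,\Gamma,D)$ is the $\Gamma\times E(G)$ matrix whose row indexed by $W$ is $\sigma(D,W)$. A matrix is totally unimodular if every square submatrix has determinant in $\{-1,0,1\}$. $F$ is $4$-regular if every vertex is incident with exactly $4$ half-edges. A transition at $v$ is a partition of the four half-edges at $v$ into two single transitions. A circuit partition $P$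 is a set of circuits of $F$ such that every half-edge lies in exactly one single transition of exactly one circuit of $P$; $\tau(P)$ is the set of transitions both of whose single transitions occur in circuits of $P$. The touch-graph $\mathrm{Tch}(P)$ has vertex set $P$, half-edge set the set of single transitions occurring in circuits of $P$, edge set $\tau(P)$, and maps each single transition to the circuit containing it. For a closed walk $W$ of $F$, $\pi_P(W)$ is obtained by replacing each directed single transition $(h,h')$ of $W$ by $(s,s')$, where $s,s'$ are the single transitions of circuits of $P$ containing $h,h'$, and deleting pairs with $s=s'$; it is a closed walk of $\mathrm{Tch}(P)$ in which each remaining $(s,s')$ traverses edge $\{s,s'\}$ from half-edge $s$ to half-edge $s'$. $\pi_P(B)$ is the multiset $\{\pi_P(W):W\in B\}$ (rows indexed by $B$). *)

theory Defs
  imports "Jordan_Normal_Form.Determinant"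
begin

text \<open>A graph G = (V,H,E,eps): V vertices, H half-edges, E a partition of H into
unordered pairs (edges), eps : H -> V the incidence map. Loops and multiple edges allowed.\<close>

definition graph :: "'v set \<Rightarrow> 'h set \<Rightarrow> 'h set set \<Rightarrow> ('h \<Rightarrow> 'v) \<Rightarrow> bool" where
  "graph V H E eps \<longleftrightarrow> finite V \<and> finite H \<and>
     (\<forall>e\<in>E. card e = 2 \<and> e \<subseteq> H) \<and>
     (\<forall>e1\<in>E. \<forall>e2\<in>E. e1 \<noteq> e2 \<longrightarrow> e1 \<inter> e2 = {}) \<and> \<Union>E = H \<and>
     (\<forall>h\<in>H. eps h \<in> V)"

text \<open>A directed version: each edge e gets a tail half-edge tail e \<in> e (the other one is the head).\<close>
definition directed_version :: "'h set set \<Rightarrow> ('h set \<Rightarrow> 'h) \<Rightarrow> bool" where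
  "directed_version E tail \<longleftrightarrow> (\<forall>e\<in>E. tail e \<in> e)"

definition four_regular :: "'v set \<Rightarrow> 'h set \<Rightarrow> ('h \<Rightarrow> 'v) \<Rightarrow> bool" where
  "four_regular V H eps \<longleftrightarrow> (\<forall>v\<in>V. card {h\<in>H. eps h = v} = 4)"

definition dir_single_transition :: "'h set \<Rightarrow> ('h \<Rightarrow> 'v) \<Rightarrow> 'h \<times> 'h \<Rightarrow> bool" where
  "dir_single_transition H eps p \<longleftrightarrow>
     fst p \<in> H \<and> snd p \<in> H \<and> fst p \<noteq> snd p \<and> eps (fst p) = eps (snd p)"

text \<open>A closed walk ((h1,h2),...,(h_{n-1},h_n)) is represented by a list of directed single
transitions (one representative of its cyclic-shift class). Its edge traversals are the pairs
(h2,h3), (h4,h5), ..., (hn,h1): the walk traverses edge {h2,h3} from h2 to h3, etc.\<close>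
definition walk_travs :: "('h \<times> 'h) list \<Rightarrow> ('h \<times> 'h) list" where
  "walk_travs W = map (\<lambda>i. (snd (W ! i), fst (W ! ((i + 1) mod length W)))) [0..<length W]"

definition closed_walk :: "'h set \<Rightarrow> 'h set set \<Rightarrow> ('h \<Rightarrow> 'v) \<Rightarrow> ('h \<times> 'h) list \<Rightarrow> bool" where
  "closed_walk H E eps W \<longleftrightarrow>
     (\<forall>p\<in>set W. dir_single_transition H eps p) \<and>
     (\<forall>t\<in>set (walk_travs W). {fst t, snd t} \<in> E)"

definition walk_edges :: "('h \<times> 'h) list \<Rightarrow> 'h set set" where
  "walk_edges W = (\<lambda>t. {fst t, snd t}) ` set (walk_travs W)"

definition walk_halfedges :: "('h \<times> 'h) list \<Rightarrow> 'h list" where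
  "walk_halfedges W = concat (map (\<lambda>p. [fst p, snd p]) W)"

definition oriented_circuit :: "'h set \<Rightarrow> 'h set set \<Rightarrow> ('h \<Rightarrow> 'v) \<Rightarrow> ('h \<times> 'h) list \<Rightarrow> bool" where
  "oriented_circuit H E eps W \<longleftrightarrow>
     W \<noteq> [] \<and> closed_walk H E eps W \<and> distinct (walk_halfedges W)"

definition sigma_trav :: "('h set \<Rightarrow> 'h) \<Rightarrow> ('h \<times> 'h) list \<Rightarrow> 'h set \<Rightarrow> int" where
  "sigma_trav tail trs e =
     int (length (filter (\<lambda>t. {fst t, snd t} = e \<and> fst t = tail e) trs))
   - int (length (filter (\<lambda>t. {fst t, snd t} = e \<and> snd t = tail e) trs))"

definition sigma :: "('h set \<Rightarrow> 'h) \<Rightarrow> ('h \<times> 'h) list \<Rightarrow> 'h set \<Rightarrow> int" where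
  "sigma tail W = sigma_trav tail (walk_travs W)"

definition forest :: "'h set \<Rightarrow> 'h set set \<Rightarrow> ('h \<Rightarrow> 'v) \<Rightarrow> 'h set set \<Rightarrow> bool" where
  "forest H E eps T \<longleftrightarrow> T \<subseteq> E \<and>
     \<not> (\<exists>W. oriented_circuit H E eps W \<and> walk_edges W \<subseteq> T)"

definition maximal_forest :: "'h set \<Rightarrow> 'h set set \<Rightarrow> ('h \<Rightarrow> 'v) \<Rightarrow> 'h set set \<Rightarrow> bool" where
  "maximal_forest H E eps T \<longleftrightarrow> forest H E eps T \<and>
     (\<forall>e\<in>E - T. \<not> forest H E eps (insert e T))"

text \<open>B is a strictly fundamental cycle basis w.r.t. T: it consists of exactly one oriented
representative of the fundamental circuit of each non-tree edge e (the unique circuit whose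
only edge outside T is e), in an arbitrary orientation.\<close>
definition strictly_fundamental_basis ::
    "'h set \<Rightarrow> 'h set set \<Rightarrow> ('h \<Rightarrow> 'v) \<Rightarrow> 'h set set \<Rightarrow> ('h \<times> 'h) list set \<Rightarrow> bool" where
  "strictly_fundamental_basis H E eps T B \<longleftrightarrow> maximal_forest H E eps T \<and>
     (\<exists>f. bij_betw f B (E - T) \<and>
        (\<forall>W\<in>B. oriented_circuit H E eps W \<and> walk_edges W - T = {f W}))"

definition strictly_fundamental_cycle_basis ::
    "'h set \<Rightarrow> 'h set set \<Rightarrow> ('h \<Rightarrow> 'v) \<Rightarrow> ('h \<times> 'h) list set \<Rightarrow> bool" where
  "strictly_fundamental_cycle_basis H E eps B \<longleftrightarrow>
     (\<exists>T. strictly_fundamental_basis H E eps T B)"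

definition strans :: "('h \<times> 'h) list \<Rightarrow> 'h set set" where
  "strans C = (\<lambda>p. {fst p, snd p}) ` set C"

text \<open>A circuit partition is a set P of circuits, each represented by one oriented circuit
(the orientation is irrelevant for everything below), such that every half-edge lies in
exactly one single transition of exactly one circuit of P.\<close>
definition circuit_partition ::
    "'h set \<Rightarrow> 'h set set \<Rightarrow> ('h \<Rightarrow> 'v) \<Rightarrow> ('h \<times> 'h) list set \<Rightarrow> bool" where
  "circuit_partition H E eps P \<longleftrightarrow>
     (\<forall>C\<in>P. oriented_circuit H E eps C) \<and>
     (\<forall>h\<in>H. \<exists>!cs. fst cs \<in> P \<and> snd cs \<in> strans (fst cs) \<and> h \<in> snd cs)"

text \<open>Half-edges of Tch(P): the single transitions occurring in circuits of P.\<close>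
definition tch_halfedges :: "('h \<times> 'h) list set \<Rightarrow> 'h set set" where
  "tch_halfedges P = (\<Union>C\<in>P. strans C)"

text \<open>Edges of Tch(P): tau(P), the transitions (at some vertex v: partitions of the four
half-edges at v into two single transitions) both of whose single transitions occur in P.\<close>
definition tch_edges :: "'v set \<Rightarrow> 'h set \<Rightarrow> ('h \<Rightarrow> 'v) \<Rightarrow> ('h \<times> 'h) list set \<Rightarrow> 'h set set set" where
  "tch_edges V H eps P = {{s1, s2} | s1 s2.
     s1 \<in> tch_halfedges P \<and> s2 \<in> tch_halfedges P \<and> s1 \<inter> s2 = {} \<and>
     (\<exists>v\<in>V. s1 \<union> s2 = {h\<in>H. eps h = v})}"

text \<open>Incidence of Tch(P): a single transition is mapped to the circuit containing it.\<close>
definition tch_eps :: "('h \<times> 'h) list set \<Rightarrow> 'h set \<Rightarrow> ('h \<times> 'h) list" where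
  "tch_eps P s = (THE C. C \<in> P \<and> s \<in> strans C)"

definition pst :: "('h \<times> 'h) list set \<Rightarrow> 'h \<Rightarrow> 'h set" where
  "pst P h = (THE s. s \<in> tch_halfedges P \<and> h \<in> s)"

text \<open>Each remaining
(s,s') traverses the touch-graph edge {s,s'} from half-edge s to half-edge s'; hence the list
returned is exactly the list of edge traversals of the closed walk pi_P(W) of Tch(P).\<close>
definition piP :: "('h \<times> 'h) list set \<Rightarrow> ('h \<times> 'h) list \<Rightarrow> ('h set \<times> 'h set) list" where
  "piP P W = filter (\<lambda>p. fst p \<noteq> snd p) (map (\<lambda>p. (pst P (fst p), pst P (snd p))) W)"

text \<open>CM(Tch(P), pi_P(B), D): the B x tau(P) matrix whose row W is sigma(D, pi_P(W)).\<close>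
definition CM_touch :: "('h set set \<Rightarrow> 'h set) \<Rightarrow> ('h \<times> 'h) list set \<Rightarrow>
    ('h \<times> 'h) list \<Rightarrow> 'h set set \<Rightarrow> int" where
  "CM_touch tlD P W e = sigma_trav tlD (piP P W) e"

definition totally_unimodular :: "'r set \<Rightarrow> 'c set \<Rightarrow> ('r \<Rightarrow> 'c \<Rightarrow> int) \<Rightarrow> bool" where
  "totally_unimodular R C M \<longleftrightarrow>
     (\<forall>k f g. f ` {..<k} \<subseteq> R \<longrightarrow> inj_on f {..<k} \<longrightarrow> g ` {..<k} \<subseteq> C \<longrightarrow> inj_on g {..<k} \<longrightarrow>
        det (mat k k (\<lambda>(i, j). M (f i) (g j))) \<in> {-1, 0, 1})"

end

theory Submission
  imports Defs
begin
lemma det_mat0: "det (mat 0 0 f :: int mat) = 1"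
proof -
  have "mat 0 0 f = (1\<^sub>m 0 :: int mat)" by (rule eq_matI) auto
  then show ?thesis by simp
qed

lemma det_single_col:
  fixes M :: "int mat"
  assumes M: "M \<in> carrier_mat n n" and j0: "j0 < n" and i0: "i0 < n"
    and z: "\<And>i. i < n \<Longrightarrow> i \<noteq> i0 \<Longrightarrow> M $$ (i, j0) = 0"
  shows "det M = M $$ (i0, j0) * cofactor M i0 j0"
proof -
  have "det M = (\<Sum>i<n. M $$ (i,j0) * cofactor M i j0)"
    by (rule laplace_expansion_column[OF M j0])
  also have "\<dots> = (\<Sum>i\<in>{i0}. M $$ (i,j0) * cofactor M i j0)"
    by (rule sum.mono_neutral_right) (use i0 z in auto)
  finally show ?thesis by simp
qed

lemma det_zero_col:
  fixes M :: "int mat"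
  assumes M: "M \<in> carrier_mat n n" and j0: "j0 < n"
    and z: "\<And>i. i < n \<Longrightarrow> M $$ (i, j0) = 0"
  shows "det M = 0"
proof -
  have "det M = (\<Sum>i<n. M $$ (i,j0) * cofactor M i j0)"
    by (rule laplace_expansion_column[OF M j0])
  also have "\<dots> = 0" using z by simp
  finally show ?thesis .
qed

lemma det_L:
  assumes i0: "i0 < n"
  shows "det (mat n n (\<lambda>(i,l). if i = l then 1 else if l = i0 then c i else 0) :: int mat) = 1"
proof -
  let ?L = "mat n n (\<lambda>(i,l). if i = l then 1 else if l = i0 then c i else 0) :: int mat"
  have L: "?L \<in> carrier_mat n n" by simp
  have "det ?L = (\<Sum>j<n. ?L $$ (i0,j) * cofactor ?L i0 j)"
    by (rule laplace_expansion_row[OF L i0])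
  also have "\<dots> = (\<Sum>j\<in>{i0}. ?L $$ (i0,j) * cofactor ?L i0 j)"
    by (rule sum.mono_neutral_right) (use i0 in auto)
  also have "\<dots> = cofactor ?L i0 i0" using i0 by simp
  also have "\<dots> = det (mat_delete ?L i0 i0)" unfolding cofactor_def
    by (simp add: power_even_eq[symmetric])
  also have "mat_delete ?L i0 i0 = 1\<^sub>m (n - 1)"
    by (rule eq_matI) (auto simp: mat_delete_def)
  finally show ?thesis by simp
qed

lemma TU_abs:
  fixes A :: "'n \<Rightarrow> 'k set" and rk :: "'k \<Rightarrow> nat"
  assumes rank: "\<And>x y c c'. c \<in> A x \<Longrightarrow> c \<in> A y \<Longrightarrow> c' \<in> A x \<Longrightarrow> c' \<notin> A y \<Longrightarrow> rk c < rk c'"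
  shows "(\<forall>j. d j \<in> {1,-1::int}) \<Longrightarrow>
    det (mat k k (\<lambda>(i,j). d j * (of_bool (g j \<in> A (a i)) - of_bool (g j \<in> A (b i))))) \<in> {-1,0,1::int}"
proof (induction k arbitrary: a b g d)
  case 0
  then show ?case by (simp add: det_mat0)
next
  case (Suc k)
  define n where "n = Suc k"
  let ?M = "mat n n (\<lambda>(i,j). d j * (of_bool (g j \<in> A (a i)) - of_bool (g j \<in> A (b i)))) :: int mat"
  have Mc: "?M \<in> carrier_mat n n" by simp
  obtain j0 where j0: "j0 < n" and j0max: "\<And>j. j < n \<Longrightarrow> rk (g j) \<le> rk (g j0)"
  proof -
    have fin: "finite ((\<lambda>j. rk (g j)) ` {..<n})" by simp
    have ne: "(\<lambda>j. rk (g j)) ` {..<n} \<noteq> {}" unfolding n_def by auto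
    obtain j0 where "j0 < n" "rk (g j0) = Max ((\<lambda>j. rk (g j)) ` {..<n})"
      using Max_in[OF fin ne] by auto
    then show ?thesis using that fin by (metis Max_ge image_eqI lessThan_iff)
  qed
  have key: "g j \<in> A x \<longleftrightarrow> g j \<in> A y" if "g j0 \<in> A x" "g j0 \<in> A y" "j < n" for x y j
    using rank[of "g j0" x y "g j"] rank[of "g j0" y x "g j"] j0max[OF that(3)] that by force
  show ?case
  proof (cases "\<forall>i<n. (g j0 \<in> A (a i)) = (g j0 \<in> A (b i))")
    case True
    have "det ?M = 0"
      by (rule det_zero_col[OF Mc j0]) (use True j0 in auto)
    then show ?thesis unfolding n_def by simp
  next
    case False
    then obtain i0 where i0: "i0 < n" and dif: "(g j0 \<in> A (a i0)) \<noteq> (g j0 \<in> A (b i0))" by auto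
    define p where "p = (if g j0 \<in> A (a i0) then a i0 else b i0)"
    define q where "q = (if g j0 \<in> A (a i0) then b i0 else a i0)"
    define \<sigma> :: int where "\<sigma> = (if g j0 \<in> A (a i0) then 1 else -1)"
    have pq: "g j0 \<in> A p" "g j0 \<notin> A q" using dif unfolding p_def q_def by auto
    have row0: "of_bool (g j \<in> A (a i0)) - of_bool (g j \<in> A (b i0)) =
        \<sigma> * (of_bool (g j \<in> A p) - of_bool (g j \<in> A q))" for j
      unfolding p_def q_def \<sigma>_def by auto
    define a' where "a' = (\<lambda>i. if i = i0 then a i else
       if g j0 \<in> A (a i) \<and> g j0 \<notin> A (b i) then q else a i)"
    define b' where "b' = (\<lambda>i. if i = i0 then b i else
       if g j0 \<notin> A (a i) \<and> g j0 \<in> A (b i) then q else b i)"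
    define c :: "nat \<Rightarrow> int" where "c = (\<lambda>i. - \<sigma> * (of_bool (g j0 \<in> A (a i)) - of_bool (g j0 \<in> A (b i))))"
    let ?M' = "mat n n (\<lambda>(i,j). d j * (of_bool (g j \<in> A (a' i)) - of_bool (g j \<in> A (b' i)))) :: int mat"
    let ?L = "mat n n (\<lambda>(i,l). if i = l then 1 else if l = i0 then c i else 0) :: int mat"
    have \<sigma>1: "\<sigma> = 1 \<or> \<sigma> = -1" unfolding \<sigma>_def by auto
    have entry: "?M' $$ (i,j) = ?M $$ (i,j) + (if i = i0 then 0 else c i * ?M $$ (i0, j))"
      if "i < n" "j < n" for i j
    proof (cases "i = i0")
      case True then show ?thesis using that unfolding a'_def b'_def by simp
    next
      case F: False
      consider (eq) "(g j0 \<in> A (a i)) = (g j0 \<in> A (b i))"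
        | (xa) "g j0 \<in> A (a i)" "g j0 \<notin> A (b i)"
        | (yb) "g j0 \<notin> A (a i)" "g j0 \<in> A (b i)" by blast
      then show ?thesis
      proof cases
        case eq then show ?thesis using that F unfolding a'_def b'_def c_def by auto
      next
        case xa
        have k1: "g j \<in> A (a i) \<longleftrightarrow> g j \<in> A p" using key[OF xa(1) pq(1) that(2)] .
        have ci: "c i = - \<sigma>" using xa unfolding c_def by simp
        have m0: "?M $$ (i0,j) = d j * (\<sigma> * (of_bool (g j \<in> A p) - of_bool (g j \<in> A q)))"
          using i0 that by (simp add: row0)
        have mi: "?M $$ (i,j) = d j * (of_bool (g j \<in> A (a i)) - of_bool (g j \<in> A (b i)))"
          using that by simp
        have m': "?M' $$ (i,j) = d j * (of_bool (g j \<in> A q) - of_bool (g j \<in> A (b i)))"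
          using that F xa unfolding a'_def b'_def by simp
        show ?thesis unfolding m0 mi m' ci using F k1 \<sigma>1 by (auto simp: algebra_simps)
      next
        case yb
        have k1: "g j \<in> A (b i) \<longleftrightarrow> g j \<in> A p" using key[OF yb(2) pq(1) that(2)] .
        have ci: "c i = \<sigma>" using yb unfolding c_def by simp
        have m0: "?M $$ (i0,j) = d j * (\<sigma> * (of_bool (g j \<in> A p) - of_bool (g j \<in> A q)))"
          using i0 that by (simp add: row0)
        have mi: "?M $$ (i,j) = d j * (of_bool (g j \<in> A (a i)) - of_bool (g j \<in> A (b i)))"
          using that by simp
        have m': "?M' $$ (i,j) = d j * (of_bool (g j \<in> A (a i)) - of_bool (g j \<in> A q))"
          using that F yb unfolding a'_def b'_def by simp
        show ?thesis unfolding m0 mi m' ci using F k1 \<sigma>1 by (auto simp: algebra_simps)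
      qed
    qed
    have prod: "?M' = ?L * ?M"
    proof (rule eq_matI)
      fix i j assume ij: "i < dim_row (?L * ?M)" "j < dim_col (?L * ?M)"
      then have i: "i < n" and j: "j < n" by auto
      have "(?L * ?M) $$ (i,j) = (\<Sum>l\<in>{0..<n}. ?L $$ (i,l) * ?M $$ (l,j))"
        using i j by (simp add: scalar_prod_def)
      also have "\<dots> = (\<Sum>l\<in>{0..<n}. (if l = i then ?M $$ (l,j) else 0) +
                     (if l = i0 \<and> i \<noteq> i0 then c i * ?M $$ (l,j) else 0))"
        by (rule sum.cong) (use i in auto)
      also have "\<dots> = ?M $$ (i,j) + (if i = i0 then 0 else c i * ?M $$ (i0, j))"
        using i i0 by (simp add: sum.distrib sum.delta' del: index_mat)
      finally show "?M' $$ (i,j) = (?L * ?M) $$ (i,j)" using entry[OF i j] by simp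
    qed auto
    have detM': "det ?M' = det ?M"
      using prod det_mult[of ?L n ?M] det_L[OF i0, of c] by simp
    have z: "?M' $$ (i, j0) = 0" if "i < n" "i \<noteq> i0" for i
      using that j0 pq unfolding a'_def b'_def by auto
    have M'c: "?M' \<in> carrier_mat n n" by simp
    have e0: "?M' $$ (i0, j0) \<in> {1,-1}"
      using i0 j0 dif Suc.prems[rule_format, of j0] unfolding a'_def b'_def by auto
    define sk where "sk = (\<lambda>i. if i < i0 then i else Suc i)"
    define sj where "sj = (\<lambda>j. if j < j0 then j else Suc j)"
    have del: "mat_delete ?M' i0 j0 = mat k k (\<lambda>(i,j). (d \<circ> sj) j *
        (of_bool ((g \<circ> sj) j \<in> A ((a' \<circ> sk) i)) - of_bool ((g \<circ> sj) j \<in> A ((b' \<circ> sk) i))))"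
      by (rule eq_matI) (auto simp: mat_delete_def sk_def sj_def n_def)
    have IH: "det (mat_delete ?M' i0 j0) \<in> {-1,0,1}"
      unfolding del by (rule Suc.IH) (use Suc.prems in auto)
    have "det ?M' = ?M' $$ (i0, j0) * cofactor ?M' i0 j0"
      by (rule det_single_col[OF M'c j0 i0 z])
    then have "det ?M' \<in> {-1,0,1}" using e0 IH unfolding cofactor_def
      by (auto simp: minus_one_power_iff)
    then show ?thesis using detM' unfolding n_def by simp
  qed
qed

definition mkW :: "('h \<times> 'h) list \<Rightarrow> ('h \<times> 'h) list" where
  "mkW trs = map (\<lambda>i. (snd (trs ! ((i + length trs - 1) mod length trs)), fst (trs ! i))) [0..<length trs]"

lemma mod_prev_next:
  assumes "i < (n::nat)" shows "((i + n - 1) mod n + 1) mod n = i"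
proof (cases i)
  case 0 then show ?thesis using assms by (cases n) auto
next
  case (Suc k)
  have "i + n - 1 = k + n" using Suc by simp
  then have "(i + n - 1) mod n = k" using assms Suc by simp
  then show ?thesis using assms Suc by simp
qed

lemma mod_next_prev:
  assumes "j < (n::nat)" shows "((j + 1) mod n + n - 1) mod n = j"
proof (cases "Suc j < n")
  case True then show ?thesis by simp
next
  case False
  then have "j = n - 1" using assms by simp
  then show ?thesis using assms by (cases n) auto
qed

lemma length_mkW[simp]: "length (mkW trs) = length trs"
  unfolding mkW_def by simp

lemma nth_mkW: "i < length trs \<Longrightarrow> mkW trs ! i =
   (snd (trs ! ((i + length trs - 1) mod length trs)), fst (trs ! i))"
  unfolding mkW_def by simp

lemma walk_travs_mkW: "walk_travs (mkW trs) = trs"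
proof (rule nth_equalityI)
  show "length (walk_travs (mkW trs)) = length trs" unfolding walk_travs_def by simp
next
  fix i assume "i < length (walk_travs (mkW trs))"
  then have i: "i < length trs" unfolding walk_travs_def by simp
  then have n: "length trs > 0" by linarith
  have p: "(i + 1) mod length trs < length trs" using n by simp
  have "walk_travs (mkW trs) ! i = (snd (mkW trs ! i), fst (mkW trs ! ((i + 1) mod length trs)))"
    unfolding walk_travs_def using i by simp
  also have "\<dots> = trs ! i" using nth_mkW[OF i] nth_mkW[OF p] mod_next_prev[OF i] by simp
  finally show "walk_travs (mkW trs) ! i = trs ! i" .
qed

fun chainL :: "('h \<Rightarrow> 'v) \<Rightarrow> ('h \<times> 'h) list \<Rightarrow> bool" where
  "chainL eps [] = True"
| "chainL eps [t] = True"
| "chainL eps (t # t' # r) = (eps (snd t) = eps (fst t') \<and> chainL eps (t' # r))"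

lemma chainL_nth: "chainL eps trs \<Longrightarrow> Suc i < length trs \<Longrightarrow> eps (snd (trs ! i)) = eps (fst (trs ! Suc i))"
proof (induction eps trs arbitrary: i rule: chainL.induct)
  case (3 eps t t' r)
  then show ?case by (cases i) auto
qed auto

lemma chainL_append: "chainL eps xs \<Longrightarrow> chainL eps ys \<Longrightarrow>
   (xs \<noteq> [] \<Longrightarrow> ys \<noteq> [] \<Longrightarrow> eps (snd (last xs)) = eps (fst (hd ys))) \<Longrightarrow> chainL eps (xs @ ys)"
proof (induction eps xs rule: chainL.induct)
  case (2 eps t)
  then show ?case by (cases ys) auto
qed auto

lemma chainL_cyc:
  assumes "chainL eps trs" "trs \<noteq> []" "eps (snd (last trs)) = eps (fst (hd trs))" "i < length trs"
  shows "eps (snd (trs ! i)) = eps (fst (trs ! ((i + 1) mod length trs)))"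
proof (cases "Suc i < length trs")
  case True then show ?thesis using chainL_nth[OF assms(1) True] by simp
next
  case False
  then have i: "i = length trs - 1" using assms(4) by simp
  then have "(i + 1) mod length trs = 0" using assms(2) by simp
  then show ?thesis using assms i by (simp add: last_conv_nth hd_conv_nth)
qed

lemma length_wh: "length (walk_halfedges W) = 2 * length W"
  unfolding walk_halfedges_def by (induction W) auto

lemma set_wh: "set (walk_halfedges W) = fst ` set W \<union> snd ` set W"
  unfolding walk_halfedges_def by (induction W) auto

lemma distinct_wh_snd: "distinct (walk_halfedges W) \<Longrightarrow> distinct (map snd W)"
  unfolding walk_halfedges_def by (induction W) auto

lemma map_fst_walk_travs: "map fst (walk_travs W) = map snd W"
  unfolding walk_travs_def by (rule nth_equalityI) auto

locale gs =
  fixes V :: "'v set" and H :: "'h set" and E :: "'h set set" and eps :: "'h \<Rightarrow> 'v"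
    and T :: "'h set set"
  assumes gr: "graph V H E eps" and TE: "T \<subseteq> E"
    and noc: "\<And>W. oriented_circuit H E eps W \<Longrightarrow> walk_edges W \<subseteq> T \<Longrightarrow> False"
begin

lemma finH: "finite H" and finV: "finite V" and E2: "\<And>e. e \<in> E \<Longrightarrow> card e = 2"
  and EH: "\<And>e. e \<in> E \<Longrightarrow> e \<subseteq> H"
  and Edisj: "\<And>e1 e2. e1 \<in> E \<Longrightarrow> e2 \<in> E \<Longrightarrow> e1 \<noteq> e2 \<Longrightarrow> e1 \<inter> e2 = {}"
  and epsV: "\<And>h. h \<in> H \<Longrightarrow> eps h \<in> V"
  using gr unfolding graph_def by auto

lemma E_ne: "{a, b} \<in> E \<Longrightarrow> a \<noteq> b"
proof
  assume "{a, b} \<in> E" "a = b"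
  then have "card {a,b} = 1" by simp
  then show False using E2[OF \<open>{a,b} \<in> E\<close>] by simp
qed

lemma edge_eq: "{a,b} \<in> E \<Longrightarrow> e \<in> E \<Longrightarrow> x \<in> {a,b} \<Longrightarrow> x \<in> e \<Longrightarrow> e = {a,b}"
  using Edisj[of "{a,b}" e] by blast

lemma OC:
  assumes ne: "trs \<noteq> []"
    and inT: "\<And>t. t \<in> set trs \<Longrightarrow> fst t \<in> H \<and> snd t \<in> H \<and> {fst t, snd t} \<in> T"
    and de: "distinct (map (\<lambda>t. {fst t, snd t}) trs)"
    and ch: "chainL eps trs" and cl: "eps (snd (last trs)) = eps (fst (hd trs))"
  shows False
proof -
  let ?n = "length trs"
  let ?W = "mkW trs"
  have n: "?n > 0" using ne by simp
  have inE: "t \<in> set trs \<Longrightarrow> {fst t, snd t} \<in> E" for t using inT[of t] TE by auto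
  have dedge: "i = j" if "i < ?n" "j < ?n" "{fst (trs!j), snd (trs!j)} = {fst (trs!i), snd (trs!i)}" for i j
  proof -
    have "map (\<lambda>t. {fst t, snd t}) trs ! i = map (\<lambda>t. {fst t, snd t}) trs ! j" using that by simp
    then show ?thesis using nth_eq_iff_index_eq[OF de] that by simp
  qed
  have fs: "fst (trs ! i) \<noteq> snd (trs ! j)" if "i < ?n" "j < ?n" for i j
  proof
    assume eq: "fst (trs ! i) = snd (trs ! j)"
    have ei: "{fst (trs!i), snd (trs!i)} \<in> E" using inE that(1) by simp
    have ej: "{fst (trs!j), snd (trs!j)} \<in> E" using inE that(2) by simp
    have "{fst (trs!j), snd (trs!j)} = {fst (trs!i), snd (trs!i)}"
      using edge_eq[OF ei ej, of "fst (trs!i)"] eq by simp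
    then have "i = j" using dedge[OF that(1) that(2)] by simp
    then show False using eq E_ne[OF ei] by simp
  qed
  have ff: "fst (trs ! i) \<noteq> fst (trs ! j)" and ss: "snd (trs ! i) \<noteq> snd (trs ! j)"
    if "i < ?n" "j < ?n" "i \<noteq> j" for i j
  proof -
    have ei: "{fst (trs!i), snd (trs!i)} \<in> E" using inE that(1) by simp
    have ej: "{fst (trs!j), snd (trs!j)} \<in> E" using inE that(2) by simp
    have ne': "{fst (trs!j), snd (trs!j)} \<noteq> {fst (trs!i), snd (trs!i)}"
      using dedge[OF that(1) that(2)] that(3) by auto
    show "fst (trs ! i) \<noteq> fst (trs ! j)"
    proof
      assume eq: "fst (trs ! i) = fst (trs ! j)"
      have "{fst (trs!j), snd (trs!j)} = {fst (trs!i), snd (trs!i)}"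
        using edge_eq[OF ei ej, of "fst (trs!i)"] eq by simp
      then show False using ne' by simp
    qed
    show "snd (trs ! i) \<noteq> snd (trs ! j)"
    proof
      assume eq: "snd (trs ! i) = snd (trs ! j)"
      have "{fst (trs!j), snd (trs!j)} = {fst (trs!i), snd (trs!i)}"
        using edge_eq[OF ei ej, of "snd (trs!i)"] eq by simp
      then show False using ne' by simp
    qed
  qed
  have dhs: "distinct (walk_halfedges ?W)"
  proof -
    have "set (walk_halfedges ?W) = fst ` set trs \<union> snd ` set trs"
    proof -
      have "fst ` set ?W = snd ` set trs"
      proof
        show "fst ` set ?W \<subseteq> snd ` set trs"
        proof
          fix x assume "x \<in> fst ` set ?W"
          then obtain i where i: "i < ?n" "x = fst (?W ! i)" by (auto simp: in_set_conv_nth)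
          have "(i + ?n - 1) mod ?n < ?n" using n by simp
          moreover have "x = snd (trs ! ((i + ?n - 1) mod ?n))" using i nth_mkW[OF i(1)] by simp
          ultimately show "x \<in> snd ` set trs" by (intro image_eqI[where x="trs ! ((i + ?n - 1) mod ?n)"] nth_mem)
        qed
      next
        show "snd ` set trs \<subseteq> fst ` set ?W"
        proof
          fix x assume "x \<in> snd ` set trs"
          then obtain j where j: "j < ?n" "x = snd (trs ! j)" by (auto simp: in_set_conv_nth)
          have "?W ! ((j+1) mod ?n) = (x, fst (trs ! ((j+1) mod ?n)))"
            using nth_mkW[of "(j+1) mod ?n" trs] n j mod_next_prev[OF j(1)] by simp
          moreover have "(j+1) mod ?n < length ?W" using n by simp
          ultimately show "x \<in> fst ` set ?W"
            by (intro image_eqI[where x="?W ! ((j+1) mod ?n)"] nth_mem) auto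
        qed
      qed
      moreover have "snd ` set ?W = fst ` set trs"
      proof
        show "snd ` set ?W \<subseteq> fst ` set trs"
        proof
          fix x assume "x \<in> snd ` set ?W"
          then obtain i where i: "i < ?n" "x = snd (?W ! i)" by (auto simp: in_set_conv_nth)
          moreover have "x = fst (trs ! i)" using i nth_mkW[OF i(1)] by simp
          ultimately show "x \<in> fst ` set trs" by (intro image_eqI[where x="trs ! i"] nth_mem) auto
        qed
      next
        show "fst ` set trs \<subseteq> snd ` set ?W"
        proof
          fix x assume "x \<in> fst ` set trs"
          then obtain i where i: "i < ?n" "x = fst (trs ! i)" by (auto simp: in_set_conv_nth)
          moreover have "x = snd (?W ! i)" using i nth_mkW[OF i(1)] by simp
          ultimately show "x \<in> snd ` set ?W" by (intro image_eqI[where x="?W ! i"] nth_mem) auto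
        qed
      qed
      ultimately show ?thesis unfolding set_wh by auto
    qed
    moreover have "card (fst ` set trs \<union> snd ` set trs) = 2 * ?n"
    proof -
      have "fst ` set trs \<inter> snd ` set trs = {}"
      proof (rule ccontr)
        assume "fst ` set trs \<inter> snd ` set trs \<noteq> {}"
        then obtain x where "x \<in> fst ` set trs" "x \<in> snd ` set trs" by blast
        then obtain i j where "i < ?n" "j < ?n" "x = fst (trs ! i)" "x = snd (trs ! j)"
          by (auto simp: in_set_conv_nth)
        then show False using fs[of i j] by simp
      qed
      moreover have "card (fst ` set trs) = ?n"
      proof -
        have "distinct (map fst trs)" using ff by (auto simp: distinct_conv_nth)
        from distinct_card[OF this] show ?thesis by simp
      qed
      moreover have "card (snd ` set trs) = ?n"
      proof -
        have "distinct (map snd trs)" using ss by (auto simp: distinct_conv_nth)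
        from distinct_card[OF this] show ?thesis by simp
      qed
      ultimately show ?thesis by (simp add: card_Un_disjoint)
    qed
    ultimately show ?thesis using length_wh[of ?W] by (simp add: card_distinct)
  qed
  have cw: "closed_walk H E eps ?W"
    unfolding closed_walk_def walk_travs_mkW
  proof (intro conjI ballI)
    fix p assume "p \<in> set ?W"
    then obtain i where i: "i < ?n" "p = ?W ! i" by (auto simp: in_set_conv_nth)
    let ?i' = "(i + ?n - 1) mod ?n"
    have i': "?i' < ?n" using n by simp
    have p: "p = (snd (trs ! ?i'), fst (trs ! i))" using i nth_mkW by simp
    have "eps (snd (trs ! ?i')) = eps (fst (trs ! ((?i' + 1) mod ?n)))"
      by (rule chainL_cyc[OF ch ne cl i'])
    then have ev: "eps (snd (trs ! ?i')) = eps (fst (trs ! i))" using mod_prev_next[OF i(1)] by simp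
    show "dir_single_transition H eps p"
      unfolding dir_single_transition_def p using inT[OF nth_mem[OF i']] inT[OF nth_mem[OF i(1)]]
        fs[OF i(1) i'] ev by auto
  next
    fix t assume "t \<in> set trs" then show "{fst t, snd t} \<in> E" using inE by blast
  qed
  have "oriented_circuit H E eps ?W"
  proof -
    have "?W \<noteq> []" using ne by (metis length_0_conv length_mkW)
    then show ?thesis unfolding oriented_circuit_def using cw dhs by blast
  qed
  moreover have "walk_edges ?W \<subseteq> T"
    unfolding walk_edges_def walk_travs_mkW using inT by auto
  ultimately show False by (rule noc)
qed

end

context gs begin

fun tpath :: "'v \<Rightarrow> 'v \<Rightarrow> ('h \<times> 'h) list \<Rightarrow> bool" where
  "tpath u w [] = (u = w)"
| "tpath u w (t # r) = (fst t \<in> H \<and> snd t \<in> H \<and> {fst t, snd t} \<in> T \<and> eps (fst t) = u \<and> tpath (eps (snd t)) w r)"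

definition pverts :: "'v \<Rightarrow> ('h \<times> 'h) list \<Rightarrow> 'v list" where
  "pverts u r = u # map (\<lambda>t. eps (snd t)) r"

lemma tpath_append: "tpath u w r \<Longrightarrow> tpath w z r' \<Longrightarrow> tpath u z (r @ r')"
  by (induction r arbitrary: u) auto

lemma tpath_chain: "tpath u w r \<Longrightarrow> chainL eps r \<and> (r \<noteq> [] \<longrightarrow> eps (fst (hd r)) = u \<and> eps (snd (last r)) = w)"
proof (induction r arbitrary: u)
  case Nil then show ?case by simp
next
  case (Cons t r)
  have tp: "tpath (eps (snd t)) w r" using Cons.prems by simp
  have IH: "chainL eps r \<and> (r \<noteq> [] \<longrightarrow> eps (fst (hd r)) = eps (snd t) \<and> eps (snd (last r)) = w)"
    by (rule Cons.IH[OF tp])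
  have "chainL eps ([t] @ r)"
    by (rule chainL_append) (use IH in auto)
  then show ?case using Cons.prems IH by auto
qed

lemma tpath_mem: "tpath u w r \<Longrightarrow> t \<in> set r \<Longrightarrow>
   fst t \<in> H \<and> snd t \<in> H \<and> {fst t, snd t} \<in> T \<and> eps (fst t) \<in> set (pverts u r) \<and> eps (snd t) \<in> set (pverts u r)"
proof (induction r arbitrary: u)
  case Nil then show ?case by simp
next
  case (Cons t' r)
  show ?case
  proof (cases "t = t'")
    case True then show ?thesis using Cons.prems by (auto simp: pverts_def)
  next
    case False
    then have "t \<in> set r" using Cons.prems by simp
    moreover have tp: "tpath (eps (snd t')) w r" using Cons.prems by simp
    ultimately have "fst t \<in> H \<and> snd t \<in> H \<and> {fst t, snd t} \<in> T \<and> eps (fst t) \<in> set (pverts (eps (snd t')) r) \<and> eps (snd t) \<in> set (pverts (eps (snd t')) r)"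
      using Cons.IH[OF tp] by simp
    then show ?thesis by (auto simp: pverts_def)
  qed
qed

lemma tpath_dist_edges: "tpath u w r \<Longrightarrow> distinct (pverts u r) \<Longrightarrow> distinct (map (\<lambda>t. {fst t, snd t}) r)"
proof (induction r arbitrary: u)
  case Nil then show ?case by simp
next
  case (Cons t r)
  have tp: "tpath (eps (snd t)) w r" using Cons.prems by simp
  have d: "distinct (pverts (eps (snd t)) r)" using Cons.prems by (simp add: pverts_def)
  have un: "u \<notin> set (pverts (eps (snd t)) r)" using Cons.prems by (simp add: pverts_def)
  have fu: "eps (fst t) = u" using Cons.prems by simp
  have "{fst t, snd t} \<notin> set (map (\<lambda>t. {fst t, snd t}) r)"
  proof
    assume "{fst t, snd t} \<in> set (map (\<lambda>t. {fst t, snd t}) r)"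
    then obtain t' where t': "t' \<in> set r" "{fst t, snd t} = {fst t', snd t'}" by auto
    have "fst t = fst t' \<or> fst t = snd t'" using t'(2) by (metis insertCI insertE singletonD)
    then have "eps (fst t) \<in> set (pverts (eps (snd t)) r)" using tpath_mem[OF tp t'(1)] by auto
    then show False using un fu by simp
  qed
  then show ?case using Cons.IH[OF tp d] by simp
qed

lemma no_loop: "a \<in> H \<Longrightarrow> b \<in> H \<Longrightarrow> {a,b} \<in> T \<Longrightarrow> eps a = eps b \<Longrightarrow> False"
  by (rule OC[of "[(a,b)]"]) auto

lemma CC:
  assumes tp: "tpath u w r" and dp: "distinct (pverts u r)" and vn: "v \<notin> set (pverts u r)"
    and H: "x \<in> H" "y \<in> H" "a \<in> H" "b \<in> H" and T: "{x,y} \<in> T" "{a,b} \<in> T"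
    and ne: "{a,b} \<noteq> {x,y}"
    and ep: "eps y = v" "eps x = u" "eps a = v" "eps b = w"
  shows False
proof -
  let ?trs = "[(y,x)] @ r @ [(b,a)]"
  have ch: "tpath_chain_dummy" if False for tpath_chain_dummy using that by simp
  have c1: "chainL eps r \<and> (r \<noteq> [] \<longrightarrow> eps (fst (hd r)) = u \<and> eps (snd (last r)) = w)"
    using tpath_chain[OF tp] .
  have uw: "r = [] \<Longrightarrow> u = w" using tp by simp
  have cr: "chainL eps (r @ [(b,a)])"
    by (rule chainL_append) (use c1 ep in auto)
  have ctrs: "chainL eps ?trs"
  proof (rule chainL_append)
    show "chainL eps [(y, x)]" by simp
    show "chainL eps (r @ [(b, a)])" by (rule cr)
    show "eps (snd (last [(y, x)])) = eps (fst (hd (r @ [(b, a)])))"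
    proof (cases r)
      case Nil then show ?thesis using uw ep by simp
    next
      case (Cons t r') then show ?thesis using c1 ep by auto
    qed
  qed
  have inT: "fst t \<in> H \<and> snd t \<in> H \<and> {fst t, snd t} \<in> T" if "t \<in> set ?trs" for t
  proof -
    have "t = (y,x) \<or> t \<in> set r \<or> t = (b,a)" using that by auto
    moreover have "t \<in> set r \<Longrightarrow> ?thesis" using tpath_mem[OF tp, of t] by simp
    ultimately show ?thesis using H T by (auto simp: insert_commute)
  qed
  have notr: "e \<notin> set (map (\<lambda>t. {fst t, snd t}) r)" if "z \<in> e" "eps z = v" for e z
  proof
    assume "e \<in> set (map (\<lambda>t. {fst t, snd t}) r)"
    then obtain t where t: "t \<in> set r" "e = {fst t, snd t}" by auto
    then have "z = fst t \<or> z = snd t" using that by auto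
    then have "eps z \<in> set (pverts u r)" using tpath_mem[OF tp t(1)] by auto
    then show False using vn that by simp
  qed
  have de: "distinct (map (\<lambda>t. {fst t, snd t}) ?trs)"
  proof -
    have "distinct (map (\<lambda>t. {fst t, snd t}) r)" by (rule tpath_dist_edges[OF tp dp])
    moreover have "{y,x} \<notin> set (map (\<lambda>t. {fst t, snd t}) r)" by (rule notr[of y]) (use ep in auto)
    moreover have "{b,a} \<notin> set (map (\<lambda>t. {fst t, snd t}) r)" by (rule notr[of a]) (use ep in auto)
    moreover have "{y,x} \<noteq> {b,a}" using ne by (auto simp: insert_commute)
    ultimately show ?thesis by simp
  qed
  show False
    by (rule OC[of ?trs]) (use inT de ctrs ep in auto)
qed

end

context gs begin

definition Aof :: "('h \<Rightarrow> 'h set) \<Rightarrow> ('v \<Rightarrow> 'v set) \<Rightarrow> ('v \<Rightarrow> 'h set) \<Rightarrow> 'h \<Rightarrow> 'v set" where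
  "Aof ps Base lo h = Base (eps h) \<union> (if ps h \<noteq> lo (eps h) then {eps h} else {})"

definition rankc :: "('h \<Rightarrow> 'v set) \<Rightarrow> ('v \<Rightarrow> nat) \<Rightarrow> 'v set \<Rightarrow> bool" where
  "rankc A rk Pl \<longleftrightarrow> (\<forall>x\<in>H. \<forall>y\<in>H. eps x \<in> Pl \<longrightarrow> eps y \<in> Pl \<longrightarrow>
      (\<forall>c c'. c \<in> A x \<longrightarrow> c \<in> A y \<longrightarrow> c' \<in> A x \<longrightarrow> c' \<notin> A y \<longrightarrow> rk c < rk c'))"

definition INV where "INV ps Fin Cur Base lo rk \<longleftrightarrow>
  Fin \<inter> Cur = {} \<and> Fin \<union> Cur \<subseteq> V \<and>
  (\<forall>x\<in>H. \<forall>y\<in>H. {x,y} \<in> T \<longrightarrow> eps x \<in> Fin \<longrightarrow> eps y \<in> Fin) \<and>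
  (\<forall>u\<in>Cur. \<forall>w\<in>Cur. \<exists>r. tpath u w r \<and> distinct (pverts u r) \<and> set (pverts u r) \<subseteq> Cur) \<and>
  (\<forall>x\<in>H. \<forall>y\<in>H. {x,y} \<in> T \<longrightarrow> eps x \<in> Fin \<union> Cur \<longrightarrow> eps y \<in> Fin \<union> Cur \<longrightarrow>
       Aof ps Base lo x = Aof ps Base lo y) \<and>
  (\<forall>v\<in>Fin \<union> Cur. Base v \<subseteq> Fin \<union> Cur \<and> v \<notin> Base v) \<and>
  (\<forall>v\<in>Fin \<union> Cur. rk v < card (Fin \<union> Cur)) \<and>
  rankc (Aof ps Base lo) rk (Fin \<union> Cur) \<and>
  (\<forall>v\<in>Fin \<union> Cur. (\<exists>h\<in>H. eps h = v) \<longrightarrow> (\<exists>h\<in>H. eps h = v \<and> lo v = ps h))"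

lemma rank_ext:
  assumes rc: "rankc (Aof ps Base lo) rk Pl"
    and fin: "finite Pl"
    and BPl: "\<And>v. v \<in> Pl \<Longrightarrow> Base v \<subseteq> Pl"
    and rkPl: "\<And>v. v \<in> Pl \<Longrightarrow> rk v < card Pl"
    and v0: "v0 \<notin> Pl"
    and B0: "B0 = {} \<or> (\<exists>x0\<in>H. eps x0 \<in> Pl \<and> B0 = Aof ps Base lo x0)"
  shows "rankc (Aof ps (Base(v0 := B0)) (lo(v0 := l0))) (rk(v0 := card Pl)) (insert v0 Pl)"
proof -
  let ?A = "Aof ps Base lo"
  let ?A' = "Aof ps (Base(v0 := B0)) (lo(v0 := l0))"
  let ?rk = "rk(v0 := card Pl)"
  have old: "?A' h = ?A h" if "eps h \<in> Pl" for h
    using that v0 unfolding Aof_def by (cases "eps h = v0") auto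
  have new: "?A' h = B0 \<union> (if ps h \<noteq> l0 then {v0} else {})" if "eps h = v0" for h
    using that unfolding Aof_def by simp
  have APl: "?A h \<subseteq> Pl" if "eps h \<in> Pl" for h
    using that BPl unfolding Aof_def by auto
  have B0Pl: "B0 \<subseteq> Pl" using B0 APl by auto
  have rkc: "?rk c = rk c" if "c \<in> Pl" for c using that v0 by auto
  have rkv: "?rk v0 = card Pl" by simp
  have oldr: "rk c < rk c'" if "x \<in> H" "y \<in> H" "eps x \<in> Pl" "eps y \<in> Pl"
    "c \<in> ?A x" "c \<in> ?A y" "c' \<in> ?A x" "c' \<notin> ?A y" for x y c c'
    using rc that unfolding rankc_def by blast
  show ?thesis unfolding rankc_def
  proof (intro ballI impI allI)
    fix x y c c' assume x: "x \<in> H" and y: "y \<in> H" and ex: "eps x \<in> insert v0 Pl" and ey: "eps y \<in> insert v0 Pl"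
      and c1: "c \<in> ?A' x" and c2: "c \<in> ?A' y" and c3: "c' \<in> ?A' x" and c4: "c' \<notin> ?A' y"
    consider (oo) "eps x \<in> Pl" "eps y \<in> Pl" | (no) "eps x = v0" "eps y \<in> Pl"
      | (on) "eps x \<in> Pl" "eps y = v0" | (nn) "eps x = v0" "eps y = v0" using ex ey by auto
    then show "?rk c < ?rk c'"
    proof cases
      case oo
      then have "rk c < rk c'" using oldr[OF x y oo, of c c'] c1 c2 c3 c4 old by simp
      moreover have "c \<in> Pl" "c' \<in> Pl" using c1 c3 old APl oo by auto
      ultimately show ?thesis using rkc by simp
    next
      case no
      have cy: "c \<in> ?A y" using c2 old no by simp
      then have cPl: "c \<in> Pl" using APl no by auto
      then have cB: "c \<in> B0" using c1 new[OF no(1)] v0 by (auto split: if_splits)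
      show ?thesis
      proof (cases "c' = v0")
        case True then show ?thesis using rkc[OF cPl] rkPl[OF cPl] by simp
      next
        case False
        then have c'B: "c' \<in> B0" using c3 new[OF no(1)] by (auto split: if_splits)
        then obtain x0 where x0: "x0 \<in> H" "eps x0 \<in> Pl" "B0 = ?A x0" using B0 by auto
        have "rk c < rk c'" using oldr[OF x0(1) y x0(2) no(2), of c c'] cB c'B x0(3) cy c4 old no by simp
        moreover have "c' \<in> Pl" using c'B B0Pl by auto
        ultimately show ?thesis using rkc cPl by simp
      qed
    next
      case on
      have cx: "c \<in> ?A x" using c1 old on by simp
      then have cPl: "c \<in> Pl" using APl on by auto
      then have cB: "c \<in> B0" using c2 new[OF on(2)] v0 by (auto split: if_splits)
      then obtain x0 where x0: "x0 \<in> H" "eps x0 \<in> Pl" "B0 = ?A x0" using B0 by auto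
      have c'x: "c' \<in> ?A x" using c3 old on by simp
      have "c' \<notin> B0" using c4 new[OF on(2)] by auto
      then have "rk c < rk c'" using oldr[OF x x0(1) on(1) x0(2), of c c'] cx cB c'x x0(3) by simp
      moreover have "c' \<in> Pl" using c'x APl on by auto
      ultimately show ?thesis using rkc cPl by simp
    next
      case nn
      have "c' = v0" using c3 c4 new[OF nn(1)] new[OF nn(2)] by (auto split: if_splits)
      then have "c \<noteq> v0" using c2 c4 by auto
      then have "c \<in> B0" using c1 new[OF nn(1)] by (auto split: if_splits)
      then have "c \<in> Pl" using B0Pl by auto
      then show ?thesis using rkc rkPl \<open>c' = v0\<close> by simp
    qed
  qed
qed

end

context gs begin

lemma step_i:
  assumes I: "INV ps Fin Cur Base lo rk"
    and x: "x \<in> H" and y: "y \<in> H" and xyT: "{x,y} \<in> T" and ex: "eps x \<in> Cur" and ey: "eps y \<notin> Fin \<union> Cur"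
  shows "INV ps Fin (insert (eps y) Cur) (Base(eps y := Aof ps Base lo x)) (lo(eps y := ps y))
           (rk(eps y := card (Fin \<union> Cur)))"
proof -
  define v where "v = eps y"
  define u where "u = eps x"
  let ?Pl = "Fin \<union> Cur"
  let ?A = "Aof ps Base lo"
  let ?B' = "Base(v := ?A x)"
  let ?lo' = "lo(v := ps y)"
  let ?rk' = "rk(v := card ?Pl)"
  let ?A' = "Aof ps ?B' ?lo'"
  note Is = I[unfolded INV_def]
  have I1: "Fin \<inter> Cur = {}" using Is by (rule conjunct1)
  have I2: "?Pl \<subseteq> V" using Is[THEN conjunct2] by (rule conjunct1)
  have I3': "\<forall>a\<in>H. \<forall>b\<in>H. {a,b} \<in> T \<longrightarrow> eps a \<in> Fin \<longrightarrow> eps b \<in> Fin"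
    using Is[THEN conjunct2, THEN conjunct2] by (rule conjunct1)
  have I4': "\<forall>u\<in>Cur. \<forall>w\<in>Cur. \<exists>r. tpath u w r \<and> distinct (pverts u r) \<and> set (pverts u r) \<subseteq> Cur"
    using Is[THEN conjunct2, THEN conjunct2, THEN conjunct2] by (rule conjunct1)
  have I5': "\<forall>a\<in>H. \<forall>b\<in>H. {a,b} \<in> T \<longrightarrow> eps a \<in> ?Pl \<longrightarrow> eps b \<in> ?Pl \<longrightarrow> ?A a = ?A b"
    using Is[THEN conjunct2, THEN conjunct2, THEN conjunct2, THEN conjunct2] by (rule conjunct1)
  have I6': "\<forall>v\<in>?Pl. Base v \<subseteq> ?Pl \<and> v \<notin> Base v"
    using Is[THEN conjunct2, THEN conjunct2, THEN conjunct2, THEN conjunct2, THEN conjunct2] by (rule conjunct1)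
  have I7': "\<forall>v\<in>?Pl. rk v < card ?Pl"
    using Is[THEN conjunct2, THEN conjunct2, THEN conjunct2, THEN conjunct2, THEN conjunct2, THEN conjunct2] by (rule conjunct1)
  have I8: "rankc ?A rk ?Pl"
    using Is[THEN conjunct2, THEN conjunct2, THEN conjunct2, THEN conjunct2, THEN conjunct2, THEN conjunct2, THEN conjunct2] by (rule conjunct1)
  have I9': "\<forall>v\<in>?Pl. (\<exists>h\<in>H. eps h = v) \<longrightarrow> (\<exists>h\<in>H. eps h = v \<and> lo v = ps h)"
    using Is[THEN conjunct2, THEN conjunct2, THEN conjunct2, THEN conjunct2, THEN conjunct2, THEN conjunct2, THEN conjunct2] by (rule conjunct2)
  have I3: "\<And>a b. a \<in> H \<Longrightarrow> b \<in> H \<Longrightarrow> {a,b} \<in> T \<Longrightarrow> eps a \<in> Fin \<Longrightarrow> eps b \<in> Fin"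
    using I3' by blast
  have I4: "\<And>u w. u \<in> Cur \<Longrightarrow> w \<in> Cur \<Longrightarrow> \<exists>r. tpath u w r \<and> distinct (pverts u r) \<and> set (pverts u r) \<subseteq> Cur"
    using I4' by blast
  have I5: "\<And>a b. a \<in> H \<Longrightarrow> b \<in> H \<Longrightarrow> {a,b} \<in> T \<Longrightarrow> eps a \<in> ?Pl \<Longrightarrow> eps b \<in> ?Pl \<Longrightarrow> ?A a = ?A b"
    using I5' by blast
  have I6: "\<And>v. v \<in> ?Pl \<Longrightarrow> Base v \<subseteq> ?Pl \<and> v \<notin> Base v" using I6' by blast
  have I7: "\<And>v. v \<in> ?Pl \<Longrightarrow> rk v < card ?Pl" using I7' by blast
  have I9: "\<And>v. v \<in> ?Pl \<Longrightarrow> (\<exists>h\<in>H. eps h = v) \<Longrightarrow> (\<exists>h\<in>H. eps h = v \<and> lo v = ps h)"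
    using I9' by blast
  have finPl: "finite ?Pl" using I2 finV finite_subset by blast
  have vPl: "v \<notin> ?Pl" using ey v_def by simp
  have vV: "v \<in> V" using epsV y v_def by simp
  have uC: "u \<in> Cur" using ex u_def by simp
  have old: "?A' h = ?A h" if "eps h \<in> ?Pl" for h
    using that vPl unfolding Aof_def by (cases "eps h = v") auto
  have APl: "?A h \<subseteq> ?Pl" if "eps h \<in> ?Pl" for h
    using that I6 unfolding Aof_def by auto
  have Ay: "?A' y = ?A x" unfolding Aof_def v_def by simp
  have Ax: "?A' x = ?A x" using old ex by simp
  have newPl: "Fin \<union> insert v Cur = insert v ?Pl" by auto
  have H1: "?A' a = ?A' b" if a: "a \<in> H" and b: "b \<in> H" and abT: "{a,b} \<in> T" and ea: "eps a = v" and eb: "eps b \<in> ?Pl" for a b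
  proof -
    have "eps b \<notin> Fin"
    proof
      assume "eps b \<in> Fin"
      then have "eps a \<in> Fin" using I3[OF b a] abT by (simp add: insert_commute)
      then show False using ea vPl by simp
    qed
    then have bC: "eps b \<in> Cur" using eb by simp
    show ?thesis
    proof (cases "{a,b} = {x,y}")
      case True
      have "a \<noteq> x" using ea ex vPl by auto
      then have ay: "a = y" using True by (metis doubleton_eq_iff)
      then have bx: "b = x" using True \<open>a \<noteq> x\<close> by (metis doubleton_eq_iff)
      show ?thesis using ay bx Ay Ax by simp
    next
      case False
      obtain r where r: "tpath u (eps b) r" "distinct (pverts u r)" "set (pverts u r) \<subseteq> Cur"
        using I4[OF uC bC] by blast
      have "v \<notin> set (pverts u r)" using r(3) vPl by auto
      from CC[OF r(1) r(2) this x y a b xyT abT False] show ?thesis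
        using v_def u_def ea by simp
    qed
  qed
  show ?thesis unfolding INV_def v_def[symmetric]
  proof (intro conjI)
    show "Fin \<inter> insert v Cur = {}" using I1 vPl by auto
    show "Fin \<union> insert v Cur \<subseteq> V" using I2 vV by auto
    show "\<forall>a\<in>H. \<forall>b\<in>H. {a, b} \<in> T \<longrightarrow> eps a \<in> Fin \<longrightarrow> eps b \<in> Fin" using I3 by blast
    show "\<forall>w1\<in>insert v Cur. \<forall>w2\<in>insert v Cur. \<exists>r. tpath w1 w2 r \<and> distinct (pverts w1 r) \<and> set (pverts w1 r) \<subseteq> insert v Cur"
    proof (intro ballI)
      fix w1 w2 assume w1: "w1 \<in> insert v Cur" and w2: "w2 \<in> insert v Cur"
      consider (cc) "w1 \<in> Cur" "w2 \<in> Cur" | (cv) "w1 \<in> Cur" "w2 = v" | (vc) "w1 = v" "w2 \<in> Cur" | (vv) "w1 = v" "w2 = v"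
        using w1 w2 by auto
      then show "\<exists>r. tpath w1 w2 r \<and> distinct (pverts w1 r) \<and> set (pverts w1 r) \<subseteq> insert v Cur"
      proof cases
        case cc then show ?thesis using I4 by blast
      next
        case cv
        obtain r where r: "tpath w1 u r" "distinct (pverts w1 r)" "set (pverts w1 r) \<subseteq> Cur"
          using I4[OF cv(1) uC] by blast
        have tp: "tpath w1 w2 (r @ [(x,y)])"
          by (rule tpath_append[OF r(1)]) (use x y xyT cv u_def v_def in simp)
        have pv: "pverts w1 (r @ [(x,y)]) = pverts w1 r @ [v]" unfolding pverts_def v_def by simp
        have "v \<notin> set (pverts w1 r)" using r(3) vPl by auto
        then show ?thesis using tp pv r by (intro exI[of _ "r @ [(x,y)]"]) auto
      next
        case vc
        obtain r where r: "tpath u w2 r" "distinct (pverts u r)" "set (pverts u r) \<subseteq> Cur"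
          using I4[OF uC vc(2)] by blast
        have tp: "tpath w1 w2 ((y,x) # r)"
          using r(1) x y xyT vc u_def v_def by (simp add: insert_commute)
        have pv: "pverts w1 ((y,x) # r) = v # pverts u r" unfolding pverts_def u_def vc by simp
        have "v \<notin> set (pverts u r)" using r(3) vPl by auto
        then show ?thesis using tp pv r by (intro exI[of _ "(y,x) # r"]) auto
      next
        case vv
        then show ?thesis by (intro exI[of _ "[]"]) (simp add: pverts_def)
      qed
    qed
    show "\<forall>a\<in>H. \<forall>b\<in>H. {a, b} \<in> T \<longrightarrow> eps a \<in> Fin \<union> insert v Cur \<longrightarrow> eps b \<in> Fin \<union> insert v Cur \<longrightarrow> ?A' a = ?A' b"
    proof (intro ballI impI)
      fix a b assume a: "a \<in> H" and b: "b \<in> H" and abT: "{a,b} \<in> T"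
        and ea: "eps a \<in> Fin \<union> insert v Cur" and eb: "eps b \<in> Fin \<union> insert v Cur"
      consider (oo) "eps a \<in> ?Pl" "eps b \<in> ?Pl" | (no) "eps a = v" "eps b \<in> ?Pl"
        | (on) "eps a \<in> ?Pl" "eps b = v" | (nn) "eps a = v" "eps b = v" using ea eb by auto
      then show "?A' a = ?A' b"
      proof cases
        case oo then show ?thesis using I5[OF a b abT oo] old by simp
      next
        case no then show ?thesis using H1[OF a b abT] by simp
      next
        case on then show ?thesis using H1[OF b a _ on(2) on(1)] abT by (simp add: insert_commute)
      next
        case nn then show ?thesis using no_loop[OF a b abT] by simp
      qed
    qed
    show "\<forall>w\<in>Fin \<union> insert v Cur. ?B' w \<subseteq> Fin \<union> insert v Cur \<and> w \<notin> ?B' w"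
    proof
      fix w assume w: "w \<in> Fin \<union> insert v Cur"
      show "?B' w \<subseteq> Fin \<union> insert v Cur \<and> w \<notin> ?B' w"
      proof (cases "w = v")
        case True then show ?thesis using APl[of x] ex vPl
          by auto
      next
        case False then show ?thesis using I6[of w] w by auto
      qed
    qed
    show "\<forall>w\<in>Fin \<union> insert v Cur. ?rk' w < card (Fin \<union> insert v Cur)"
      using I7 finPl vPl unfolding newPl by (auto simp: less_SucI)
    show "rankc ?A' ?rk' (Fin \<union> insert v Cur)"
      unfolding newPl
    proof (rule rank_ext[OF I8 finPl _ I7 vPl])
      show "\<And>w. w \<in> ?Pl \<Longrightarrow> Base w \<subseteq> ?Pl" using I6 by blast
      show "?A x = {} \<or> (\<exists>x0\<in>H. eps x0 \<in> ?Pl \<and> ?A x = ?A x0)" using x ex by blast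
    qed
    show "\<forall>w\<in>Fin \<union> insert v Cur. (\<exists>h\<in>H. eps h = w) \<longrightarrow> (\<exists>h\<in>H. eps h = w \<and> ?lo' w = ps h)"
    proof (intro ballI impI)
      fix w assume w: "w \<in> Fin \<union> insert v Cur" and hw: "\<exists>h\<in>H. eps h = w"
      show "\<exists>h\<in>H. eps h = w \<and> ?lo' w = ps h"
      proof (cases "w = v")
        case True then show ?thesis using y v_def by auto
      next
        case False then show ?thesis using I9[of w] w hw by auto
      qed
    qed
  qed
qed

end

context gs begin

lemma step_ii:
  assumes I: "INV ps Fin Cur Base lo rk"
    and noedge: "\<forall>x\<in>H. \<forall>y\<in>H. {x,y} \<in> T \<longrightarrow> eps x \<in> Cur \<longrightarrow> eps y \<in> Fin \<union> Cur"
    and rV: "r \<in> V" and rn: "r \<notin> Fin \<union> Cur"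
  shows "INV ps (Fin \<union> Cur) {r} (Base(r := {})) (lo(r := ps (SOME h. h \<in> H \<and> eps h = r)))
           (rk(r := card (Fin \<union> Cur)))"
proof -
  let ?Pl = "Fin \<union> Cur"
  let ?A = "Aof ps Base lo"
  let ?B' = "Base(r := {})"
  let ?lo' = "lo(r := ps (SOME h. h \<in> H \<and> eps h = r))"
  let ?rk' = "rk(r := card ?Pl)"
  let ?A' = "Aof ps ?B' ?lo'"
  note Is = I[unfolded INV_def]
  have I2: "?Pl \<subseteq> V" using Is[THEN conjunct2] by (rule conjunct1)
  have I3': "\<forall>a\<in>H. \<forall>b\<in>H. {a,b} \<in> T \<longrightarrow> eps a \<in> Fin \<longrightarrow> eps b \<in> Fin"
    using Is[THEN conjunct2, THEN conjunct2] by (rule conjunct1)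
  have I5': "\<forall>a\<in>H. \<forall>b\<in>H. {a,b} \<in> T \<longrightarrow> eps a \<in> ?Pl \<longrightarrow> eps b \<in> ?Pl \<longrightarrow> ?A a = ?A b"
    using Is[THEN conjunct2, THEN conjunct2, THEN conjunct2, THEN conjunct2] by (rule conjunct1)
  have I6': "\<forall>v\<in>?Pl. Base v \<subseteq> ?Pl \<and> v \<notin> Base v"
    using Is[THEN conjunct2, THEN conjunct2, THEN conjunct2, THEN conjunct2, THEN conjunct2] by (rule conjunct1)
  have I7': "\<forall>v\<in>?Pl. rk v < card ?Pl"
    using Is[THEN conjunct2, THEN conjunct2, THEN conjunct2, THEN conjunct2, THEN conjunct2, THEN conjunct2] by (rule conjunct1)
  have I8: "rankc ?A rk ?Pl"
    using Is[THEN conjunct2, THEN conjunct2, THEN conjunct2, THEN conjunct2, THEN conjunct2, THEN conjunct2, THEN conjunct2] by (rule conjunct1)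
  have I9': "\<forall>v\<in>?Pl. (\<exists>h\<in>H. eps h = v) \<longrightarrow> (\<exists>h\<in>H. eps h = v \<and> lo v = ps h)"
    using Is[THEN conjunct2, THEN conjunct2, THEN conjunct2, THEN conjunct2, THEN conjunct2, THEN conjunct2, THEN conjunct2] by (rule conjunct2)
  have I3: "\<And>a b. a \<in> H \<Longrightarrow> b \<in> H \<Longrightarrow> {a,b} \<in> T \<Longrightarrow> eps a \<in> Fin \<Longrightarrow> eps b \<in> Fin"
    using I3' by blast
  have I5: "\<And>a b. a \<in> H \<Longrightarrow> b \<in> H \<Longrightarrow> {a,b} \<in> T \<Longrightarrow> eps a \<in> ?Pl \<Longrightarrow> eps b \<in> ?Pl \<Longrightarrow> ?A a = ?A b"
    using I5' by blast
  have I6: "\<And>v. v \<in> ?Pl \<Longrightarrow> Base v \<subseteq> ?Pl \<and> v \<notin> Base v" using I6' by blast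
  have I7: "\<And>v. v \<in> ?Pl \<Longrightarrow> rk v < card ?Pl" using I7' by blast
  have I9: "\<And>v. v \<in> ?Pl \<Longrightarrow> (\<exists>h\<in>H. eps h = v) \<Longrightarrow> (\<exists>h\<in>H. eps h = v \<and> lo v = ps h)"
    using I9' by blast
  have finPl: "finite ?Pl" using I2 finV finite_subset by blast
  have old: "?A' h = ?A h" if "eps h \<in> ?Pl" for h
    using that rn unfolding Aof_def by (cases "eps h = r") auto
  have cl: "eps b \<in> ?Pl" if "a \<in> H" "b \<in> H" "{a,b} \<in> T" "eps a \<in> ?Pl" for a b
  proof (cases "eps a \<in> Fin")
    case True then show ?thesis using I3[OF that(1-3)] by simp
  next
    case False then have "eps a \<in> Cur" using that(4) by simp
    then show ?thesis using noedge that(1-3) by blast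
  qed
  have newPl: "?Pl \<union> {r} = insert r ?Pl" by auto
  show ?thesis unfolding INV_def
  proof (intro conjI)
    show "?Pl \<inter> {r} = {}" using rn by auto
    show "?Pl \<union> {r} \<subseteq> V" using I2 rV by auto
    show "\<forall>a\<in>H. \<forall>b\<in>H. {a, b} \<in> T \<longrightarrow> eps a \<in> ?Pl \<longrightarrow> eps b \<in> ?Pl" using cl by blast
    show "\<forall>u\<in>{r}. \<forall>w\<in>{r}. \<exists>p. tpath u w p \<and> distinct (pverts u p) \<and> set (pverts u p) \<subseteq> {r}"
      by (auto intro!: exI[of _ "[]"] simp: pverts_def)
    show "\<forall>a\<in>H. \<forall>b\<in>H. {a, b} \<in> T \<longrightarrow> eps a \<in> ?Pl \<union> {r} \<longrightarrow> eps b \<in> ?Pl \<union> {r} \<longrightarrow> ?A' a = ?A' b"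
    proof (intro ballI impI)
      fix a b assume a: "a \<in> H" and b: "b \<in> H" and abT: "{a,b} \<in> T"
        and ea: "eps a \<in> ?Pl \<union> {r}" and eb: "eps b \<in> ?Pl \<union> {r}"
      consider (oo) "eps a \<in> ?Pl" "eps b \<in> ?Pl" | (no) "eps a = r" "eps b \<in> ?Pl"
        | (on) "eps a \<in> ?Pl" "eps b = r" | (nn) "eps a = r" "eps b = r" using ea eb by auto
      then show "?A' a = ?A' b"
      proof cases
        case oo then show ?thesis using I5[OF a b abT oo] old by simp
      next
        case no
        have "eps a \<in> ?Pl" using cl[OF b a _ no(2)] abT by (simp add: insert_commute)
        then show ?thesis using no rn by simp
      next
        case on
        have "eps b \<in> ?Pl" using cl[OF a b abT on(1)] .
        then show ?thesis using on rn by simp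
      next
        case nn then show ?thesis using no_loop[OF a b abT] by simp
      qed
    qed
    show "\<forall>w\<in>?Pl \<union> {r}. ?B' w \<subseteq> ?Pl \<union> {r} \<and> w \<notin> ?B' w"
      using I6 by auto
    show "\<forall>w\<in>?Pl \<union> {r}. ?rk' w < card (?Pl \<union> {r})"
      using I7 finPl rn unfolding newPl by (auto simp: less_SucI)
    show "rankc ?A' ?rk' (?Pl \<union> {r})"
      unfolding newPl
      by (rule rank_ext[OF I8 finPl _ I7 rn]) (use I6 in blast)+
    show "\<forall>w\<in>?Pl \<union> {r}. (\<exists>h\<in>H. eps h = w) \<longrightarrow> (\<exists>h\<in>H. eps h = w \<and> ?lo' w = ps h)"
    proof (intro ballI impI)
      fix w assume w: "w \<in> ?Pl \<union> {r}" and hw: "\<exists>h\<in>H. eps h = w"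
      show "\<exists>h\<in>H. eps h = w \<and> ?lo' w = ps h"
      proof (cases "w = r")
        case True
        then have "\<exists>h. h \<in> H \<and> eps h = r" using hw by blast
        then have "(SOME h. h \<in> H \<and> eps h = r) \<in> H \<and> eps (SOME h. h \<in> H \<and> eps h = r) = r"
          by (rule someI_ex)
        then show ?thesis using True by auto
      next
        case False then show ?thesis using I9[of w] w hw by auto
      qed
    qed
  qed
qed

lemma INV_init: "INV ps {} {} (\<lambda>_. {}) lo (\<lambda>_. 0)"
  unfolding INV_def rankc_def by auto

lemma grow_aux: "\<forall>Fin Cur Base lo rk. card (V - (Fin \<union> Cur)) = n \<longrightarrow> INV ps Fin Cur Base lo rk \<longrightarrow>
   (\<exists>Fin' Cur' Base' lo' rk'. Fin' \<union> Cur' = V \<and> INV ps Fin' Cur' Base' lo' rk')"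
proof (induction n)
  case 0
  show ?case
  proof (intro allI impI)
    fix Fin Cur Base lo rk assume c: "card (V - (Fin \<union> Cur)) = 0" and I: "INV ps Fin Cur Base lo rk"
    have "Fin \<union> Cur \<subseteq> V" using I unfolding INV_def by blast
    moreover have "V - (Fin \<union> Cur) = {}" using c finV by simp
    ultimately have eq: "Fin \<union> Cur = V" by blast
    show "\<exists>Fin' Cur' Base' lo' rk'. Fin' \<union> Cur' = V \<and> INV ps Fin' Cur' Base' lo' rk'"
      using eq I by (intro exI[of _ Fin] exI[of _ Cur] exI[of _ Base] exI[of _ lo] exI[of _ rk]) simp
  qed
next
  case (Suc n)
  show ?case
  proof (intro allI impI)
    fix Fin Cur Base lo rk assume c: "card (V - (Fin \<union> Cur)) = Suc n" and I: "INV ps Fin Cur Base lo rk"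
    show "\<exists>Fin' Cur' Base' lo' rk'. Fin' \<union> Cur' = V \<and> INV ps Fin' Cur' Base' lo' rk'"
    proof (cases "\<exists>x\<in>H. \<exists>y\<in>H. {x,y} \<in> T \<and> eps x \<in> Cur \<and> eps y \<notin> Fin \<union> Cur")
      case True
      then obtain x y where xy: "x \<in> H" "y \<in> H" "{x,y} \<in> T" "eps x \<in> Cur" "eps y \<notin> Fin \<union> Cur" by blast
      have I': "INV ps Fin (insert (eps y) Cur) (Base(eps y := Aof ps Base lo x)) (lo(eps y := ps y))
           (rk(eps y := card (Fin \<union> Cur)))" by (rule step_i[OF I xy])
      have "eps y \<in> V" using epsV xy(2) by simp
      then have m: "eps y \<in> V - (Fin \<union> Cur)" using xy(5) by simp
      have "V - (Fin \<union> insert (eps y) Cur) = (V - (Fin \<union> Cur)) - {eps y}" by blast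
      then have "card (V - (Fin \<union> insert (eps y) Cur)) = n"
        using card_Diff_singleton[OF m] c by simp
      then show ?thesis using Suc.IH[rule_format, OF _ I'] by simp
    next
      case False
      then have noedge: "\<forall>x\<in>H. \<forall>y\<in>H. {x,y} \<in> T \<longrightarrow> eps x \<in> Cur \<longrightarrow> eps y \<in> Fin \<union> Cur" by blast
      have "V - (Fin \<union> Cur) \<noteq> {}" using c by (metis card.empty nat.distinct(1))
      then obtain r where r: "r \<in> V" "r \<notin> Fin \<union> Cur" by blast
      have I': "INV ps (Fin \<union> Cur) {r} (Base(r := {})) (lo(r := ps (SOME h. h \<in> H \<and> eps h = r)))
           (rk(r := card (Fin \<union> Cur)))" by (rule step_ii[OF I noedge r])
      have m: "r \<in> V - (Fin \<union> Cur)" using r by simp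
      have "V - ((Fin \<union> Cur) \<union> {r}) = (V - (Fin \<union> Cur)) - {r}" by blast
      then have "card (V - ((Fin \<union> Cur) \<union> {r})) = n"
        using card_Diff_singleton[OF m] c by simp
      then show ?thesis using Suc.IH[rule_format, OF _ I'] by simp
    qed
  qed
qed

lemma grow:
  "\<exists>Base lo rk. (\<forall>a\<in>H. \<forall>b\<in>H. {a,b} \<in> T \<longrightarrow> Aof ps Base lo a = Aof ps Base lo b) \<and>
     (\<forall>v\<in>V. v \<notin> Base v) \<and> rankc (Aof ps Base lo) rk V \<and>
     (\<forall>v\<in>V. (\<exists>h\<in>H. eps h = v) \<longrightarrow> (\<exists>h\<in>H. eps h = v \<and> lo v = ps h))"
proof -
  have "\<exists>Fin Cur Base lo rk. Fin \<union> Cur = V \<and> INV ps Fin Cur Base lo rk"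
    using grow_aux[of "card V", rule_format, OF _ INV_init[of ps "\<lambda>_. {}"]] by simp
  then obtain Fin Cur Base lo rk where F: "Fin \<union> Cur = V" and I: "INV ps Fin Cur Base lo rk"
    by (elim exE conjE)
  note Is = I[unfolded INV_def F]
  have I5': "\<forall>a\<in>H. \<forall>b\<in>H. {a,b} \<in> T \<longrightarrow> eps a \<in> V \<longrightarrow> eps b \<in> V \<longrightarrow> Aof ps Base lo a = Aof ps Base lo b"
    using Is[THEN conjunct2, THEN conjunct2, THEN conjunct2, THEN conjunct2] by (rule conjunct1)
  have I6': "\<forall>v\<in>V. Base v \<subseteq> V \<and> v \<notin> Base v"
    using Is[THEN conjunct2, THEN conjunct2, THEN conjunct2, THEN conjunct2, THEN conjunct2] by (rule conjunct1)
  have I8: "rankc (Aof ps Base lo) rk V"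
    using Is[THEN conjunct2, THEN conjunct2, THEN conjunct2, THEN conjunct2, THEN conjunct2, THEN conjunct2, THEN conjunct2] by (rule conjunct1)
  have I9': "\<forall>v\<in>V. (\<exists>h\<in>H. eps h = v) \<longrightarrow> (\<exists>h\<in>H. eps h = v \<and> lo v = ps h)"
    using Is[THEN conjunct2, THEN conjunct2, THEN conjunct2, THEN conjunct2, THEN conjunct2, THEN conjunct2, THEN conjunct2] by (rule conjunct2)
  have c1: "\<forall>a\<in>H. \<forall>b\<in>H. {a,b} \<in> T \<longrightarrow> Aof ps Base lo a = Aof ps Base lo b"
    using I5' epsV by simp
  have c2: "\<forall>v\<in>V. v \<notin> Base v" using I6' by simp
  show ?thesis
    by (intro exI[of _ Base] exI[of _ lo] exI[of _ rk] conjI c1 c2 I8 I9')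
qed

end

lemma int_length_filter: "int (length (filter Q xs)) = sum_list (map (\<lambda>x. of_bool (Q x)) xs)"
  by (induction xs) auto

lemma CM_sum: "CM_touch tlx P W e = sum_list (map (\<lambda>p.
    of_bool (pst P (fst p) \<noteq> pst P (snd p) \<and> {pst P (fst p), pst P (snd p)} = e \<and> pst P (fst p) = tlx e)
  - of_bool (pst P (fst p) \<noteq> pst P (snd p) \<and> {pst P (fst p), pst P (snd p)} = e \<and> pst P (snd p) = tlx e)) W)"
  unfolding CM_touch_def sigma_trav_def piP_def int_length_filter
  by (induction W) (auto simp: algebra_simps)

lemma sum_list_rotate1: "sum_list (rotate1 xs) = sum_list (xs :: int list)"
  by (cases xs) (simp_all add: add.commute)

lemma diff_sum_pairs: "sum_list (map f (map snd xs)) - sum_list (map f (map fst xs)) =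
     sum_list (map (\<lambda>t. f (snd t) - f (fst t)) xs)" for f :: "'h \<Rightarrow> int"
  by (induction xs) auto

lemma telescope:
  fixes f :: "'h \<Rightarrow> int"
  shows "sum_list (map (\<lambda>p. f (fst p) - f (snd p)) W) = sum_list (map (\<lambda>t. f (snd t) - f (fst t)) (walk_travs W))"
proof -
  have s1: "map snd (walk_travs W) = rotate1 (map fst W)"
  proof (rule nth_equalityI)
    show "length (map snd (walk_travs W)) = length (rotate1 (map fst W))" unfolding walk_travs_def by simp
  next
    fix i assume "i < length (map snd (walk_travs W))"
    then have i: "i < length W" unfolding walk_travs_def by simp
    have m: "Suc i mod length W < length W" using i by (intro mod_less_divisor) linarith
    show "map snd (walk_travs W) ! i = rotate1 (map fst W) ! i"
      unfolding walk_travs_def using i m by (simp add: nth_rotate1)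
  qed
  have s2: "map fst (walk_travs W) = map snd W" by (rule map_fst_walk_travs)
  have "sum_list (map (\<lambda>p. f (fst p) - f (snd p)) W) = sum_list (map f (map fst W)) - sum_list (map f (map snd W))"
    by (induction W) auto
  also have "sum_list (map f (map fst W)) = sum_list (map f (map snd (walk_travs W)))"
    unfolding s1 by (simp only: rotate1_map[symmetric] sum_list_rotate1)
  also have "sum_list (map f (map snd W)) = sum_list (map f (map fst (walk_travs W)))"
    unfolding s2 ..
  also have "sum_list (map f (map snd (walk_travs W))) - sum_list (map f (map fst (walk_travs W))) =
     sum_list (map (\<lambda>t. f (snd t) - f (fst t)) (walk_travs W))"
    by (rule diff_sum_pairs)
  finally show ?thesis .
qed

lemma K:
  fixes ps :: "'h \<Rightarrow> 'h set" and Base :: "'v \<Rightarrow> 'v set"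
  assumes c: "c = {sa,sb}" and dj: "sa \<inter> sb = {}" and ne: "sa \<noteq> {}"
    and Hv: "sa \<union> sb = {h\<in>H. eps h = v}"
    and pin: "\<And>h. h \<in> H \<Longrightarrow> eps h = v \<Longrightarrow> ps h = sa \<or> ps h = sb"
    and hps: "\<And>h. h \<in> H \<Longrightarrow> h \<in> ps h"
    and tlc: "tlc = sa \<or> tlc = sb"
    and lo: "lo v = sa \<or> lo v = sb"
    and vB: "v \<notin> Base v"
    and hh: "h \<in> H" "h' \<in> H" "eps h = eps h'"
  shows "(of_bool (ps h \<noteq> ps h' \<and> {ps h, ps h'} = c \<and> ps h = tlc) :: int)
       - of_bool (ps h \<noteq> ps h' \<and> {ps h, ps h'} = c \<and> ps h' = tlc)
     = (if tlc = lo v then -1 else 1) *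
       (of_bool (v \<in> Base (eps h) \<union> (if ps h \<noteq> lo (eps h) then {eps h} else {}))
      - of_bool (v \<in> Base (eps h') \<union> (if ps h' \<noteq> lo (eps h') then {eps h'} else {})))"
proof -
  have sab: "sa \<noteq> sb" using dj ne by auto
  show ?thesis
  proof (cases "eps h = v")
    case True
    then have e': "eps h' = v" using hh by simp
    have p1: "ps h = sa \<or> ps h = sb" using pin hh(1) True by blast
    have p2: "ps h' = sa \<or> ps h' = sb" using pin hh(2) e' by blast
    have sba: "sb \<noteq> sa" using sab by blast
    show ?thesis using p1 p2 tlc lo unfolding c True e'
      by (elim disjE) (simp_all add: vB sab sba insert_commute)
  next
    case False
    then have e': "eps h' \<noteq> v" using hh by simp
    have lhs: "\<not> ({ps h, ps h'} = c)"
    proof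
      assume "{ps h, ps h'} = c"
      then have "ps h = sa \<or> ps h = sb" unfolding c by (auto simp: doubleton_eq_iff)
      then have "h \<in> sa \<union> sb" using hps[OF hh(1)] by auto
      then show False using Hv False by auto
    qed
    show ?thesis using lhs False e' hh(3) by simp
  qed
qed

lemma pst_ex1:
  assumes cp: "circuit_partition H E eps P" and h: "h \<in> H"
  shows "\<exists>!s. s \<in> tch_halfedges P \<and> h \<in> s"
proof -
  have ex1: "\<exists>!cs. fst cs \<in> P \<and> snd cs \<in> strans (fst cs) \<and> h \<in> snd cs"
    using cp h unfolding circuit_partition_def by blast
  then obtain cs where cs: "fst cs \<in> P" "snd cs \<in> strans (fst cs)" "h \<in> snd cs"
    and un: "\<And>cs'. fst cs' \<in> P \<and> snd cs' \<in> strans (fst cs') \<and> h \<in> snd cs' \<Longrightarrow> cs' = cs"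
    by (elim ex1E) blast
  show ?thesis
  proof (rule ex1I[of _ "snd cs"])
    show "snd cs \<in> tch_halfedges P \<and> h \<in> snd cs" using cs unfolding tch_halfedges_def by blast
  next
    fix s assume s: "s \<in> tch_halfedges P \<and> h \<in> s"
    then obtain C where C: "C \<in> P" "s \<in> strans C" unfolding tch_halfedges_def by blast
    have "(C, s) = cs" by (rule un) (use C s in simp)
    then show "s = snd cs" by auto
  qed
qed

lemma pst1:
  assumes cp: "circuit_partition H E eps P" and h: "h \<in> H"
  shows "h \<in> pst P h \<and> pst P h \<in> tch_halfedges P"
  using theI'[OF pst_ex1[OF cp h]] unfolding pst_def by blast

lemma pst_uniq:
  assumes cp: "circuit_partition H E eps P" and h: "h \<in> H" and s: "s \<in> tch_halfedges P" "h \<in> s"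
  shows "pst P h = s"
  unfolding pst_def by (rule the1_equality[OF pst_ex1[OF cp h]]) (use s in blast)

lemma th_form:
  assumes cp: "circuit_partition H E eps P" and s: "s \<in> tch_halfedges P"
  shows "\<exists>a b. s = {a,b} \<and> a \<in> H \<and> b \<in> H \<and> a \<noteq> b \<and> eps a = eps b"
proof -
  obtain C where C: "C \<in> P" "s \<in> strans C" using s unfolding tch_halfedges_def by blast
  then obtain p where p: "p \<in> set C" "s = {fst p, snd p}" unfolding strans_def by blast
  have "oriented_circuit H E eps C" using cp C(1) unfolding circuit_partition_def by blast
  then have "dir_single_transition H eps p" using p(1) unfolding oriented_circuit_def closed_walk_def by blast
  then show ?thesis using p(2) unfolding dir_single_transition_def by blast
qed

definition colv :: "('h \<Rightarrow> 'v) \<Rightarrow> 'h set set \<Rightarrow> 'v" where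
  "colv eps c = eps (SOME h. h \<in> \<Union>c)"

lemma col:
  assumes cp: "circuit_partition H E eps P" and c: "c \<in> tch_edges V H eps P"
  shows "\<exists>s1 s2. c = {s1,s2} \<and> s1 \<in> tch_halfedges P \<and> s2 \<in> tch_halfedges P \<and> s1 \<inter> s2 = {} \<and>
     s1 \<noteq> {} \<and> colv eps c \<in> V \<and> s1 \<union> s2 = {h\<in>H. eps h = colv eps c}"
proof -
  obtain s1 s2 v where sv: "c = {s1,s2}" "s1 \<in> tch_halfedges P" "s2 \<in> tch_halfedges P" "s1 \<inter> s2 = {}"
    "v \<in> V" "s1 \<union> s2 = {h\<in>H. eps h = v}"
    using c unfolding tch_edges_def by blast
  have ne: "s1 \<noteq> {}" using th_form[OF cp sv(2)] by auto
  have U: "\<Union>c = {h\<in>H. eps h = v}" using sv by auto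
  have "\<exists>h. h \<in> \<Union>c" using ne sv(1) by auto
  then have "(SOME h. h \<in> \<Union>c) \<in> \<Union>c" by (rule someI_ex)
  then have cv: "colv eps c = v" unfolding colv_def U by simp
  show ?thesis using sv ne cv by blast
qed

lemma sum_travs:
  fixes f :: "'h \<Rightarrow> int"
  assumes d: "distinct xs" and pq: "p \<noteq> q"
    and z: "\<And>t. t \<in> set xs \<Longrightarrow> t \<noteq> (p,q) \<Longrightarrow> t \<noteq> (q,p) \<Longrightarrow> f (snd t) = f (fst t)"
  shows "sum_list (map (\<lambda>t. f (snd t) - f (fst t)) xs) =
    f (if (p,q) \<in> set xs \<and> (q,p) \<notin> set xs then q else p)
  - f (if (p,q) \<in> set xs \<and> (q,p) \<notin> set xs then p else if (q,p) \<in> set xs \<and> (p,q) \<notin> set xs then q else p)"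
proof -
  let ?g = "\<lambda>t. f (snd t) - f (fst t)"
  have "sum_list (map ?g xs) = sum ?g (set xs)" by (rule sum_list_distinct_conv_sum_set[OF d])
  also have "\<dots> = sum ?g (set xs \<inter> {(p,q),(q,p)})"
    by (rule sum.mono_neutral_right) (use z in auto)
  also have "\<dots> = f (if (p,q) \<in> set xs \<and> (q,p) \<notin> set xs then q else p)
  - f (if (p,q) \<in> set xs \<and> (q,p) \<notin> set xs then p else if (q,p) \<in> set xs \<and> (p,q) \<notin> set xs then q else p)"
  proof -
    have pq2: "(p,q) \<noteq> (q,p)" using pq by simp
    consider (b) "(p,q) \<in> set xs" "(q,p) \<in> set xs" | (l) "(p,q) \<in> set xs" "(q,p) \<notin> set xs"
      | (r) "(p,q) \<notin> set xs" "(q,p) \<in> set xs" | (n) "(p,q) \<notin> set xs" "(q,p) \<notin> set xs" by blast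
    then show ?thesis
    proof cases
      case b
      then have "set xs \<inter> {(p,q),(q,p)} = {(p,q),(q,p)}" by auto
      then show ?thesis using b pq2 by simp
    next
      case l
      then have "set xs \<inter> {(p,q),(q,p)} = {(p,q)}" by auto
      then show ?thesis using l by simp
    next
      case r
      then have "set xs \<inter> {(p,q),(q,p)} = {(q,p)}" by auto
      then show ?thesis using r by simp
    next
      case n
      then have "set xs \<inter> {(p,q),(q,p)} = {}" by auto
      then show ?thesis using n by simp
    qed
  qed
  finally show ?thesis .
qed

theorem mainTheorem12:
  fixes V :: "'v set" and H :: "'h set" and E :: "'h set set" and eps :: "'h \<Rightarrow> 'v"
    and P :: "('h \<times> 'h) list set" and B :: "('h \<times> 'h) list set"
    and tlD :: "'h set set \<Rightarrow> 'h set"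
  assumes "graph V H E eps"
    and "four_regular V H eps"
    and "circuit_partition H E eps P"
    and "directed_version (tch_edges V H eps P) tlD"
    and "strictly_fundamental_cycle_basis H E eps B"
  shows "totally_unimodular B (tch_edges V H eps P) (CM_touch tlD P)"
proof -
  note gr = assms(1) and cp = assms(3) and dv = assms(4)
  obtain T fW where mf: "maximal_forest H E eps T"
    and fb: "\<forall>W\<in>B. oriented_circuit H E eps W \<and> walk_edges W - T = {fW W}"
    using assms(5) unfolding strictly_fundamental_cycle_basis_def strictly_fundamental_basis_def by blast
  have TE: "T \<subseteq> E" using mf unfolding maximal_forest_def forest_def by blast
  have noc: "\<And>W. oriented_circuit H E eps W \<Longrightarrow> walk_edges W \<subseteq> T \<Longrightarrow> False"
    using mf unfolding maximal_forest_def forest_def by blast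
  interpret G: gs V H E eps T by (rule gs.intro[OF gr TE noc])
  have "\<exists>Base lo rk. (\<forall>a\<in>H. \<forall>b\<in>H. {a,b} \<in> T \<longrightarrow> G.Aof (pst P) Base lo a = G.Aof (pst P) Base lo b) \<and>
     (\<forall>v\<in>V. v \<notin> Base v) \<and> G.rankc (G.Aof (pst P) Base lo) rk V \<and>
     (\<forall>v\<in>V. (\<exists>h\<in>H. eps h = v) \<longrightarrow> (\<exists>h\<in>H. eps h = v \<and> lo v = pst P h))"
    by (rule G.grow)
  then obtain Base lo rk where
    cst: "\<forall>a\<in>H. \<forall>b\<in>H. {a,b} \<in> T \<longrightarrow> G.Aof (pst P) Base lo a = G.Aof (pst P) Base lo b"
    and vB: "\<forall>v\<in>V. v \<notin> Base v" and rc: "G.rankc (G.Aof (pst P) Base lo) rk V"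
    and lov: "\<forall>v\<in>V. (\<exists>h\<in>H. eps h = v) \<longrightarrow> (\<exists>h\<in>H. eps h = v \<and> lo v = pst P h)"
    by (elim exE conjE)
  define A where "A = (\<lambda>h. if h \<in> H then G.Aof (pst P) Base lo h else {})"
  define dl :: "'h set set \<Rightarrow> int" where "dl = (\<lambda>c. if tlD c = lo (colv eps c) then -1 else 1)"
  have AH: "A h = Base (eps h) \<union> (if pst P h \<noteq> lo (eps h) then {eps h} else {})" if "h \<in> H" for h
    using that unfolding A_def G.Aof_def by simp
  have rowform: "\<exists>a\<in>H. \<exists>b\<in>H. \<forall>c \<in> tch_edges V H eps P.
      CM_touch tlD P W c = dl c * (of_bool (colv eps c \<in> A a) - of_bool (colv eps c \<in> A b))"
    if W: "W \<in> B" for W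
  proof -
    have oc: "oriented_circuit H E eps W" and eW: "walk_edges W - T = {fW W}" using fb W by auto
    have cw: "closed_walk H E eps W" and dW: "distinct (walk_halfedges W)" and Wne: "W \<noteq> []"
      using oc unfolding oriented_circuit_def by auto
    have trE: "{fst t, snd t} \<in> E" if "t \<in> set (walk_travs W)" for t
      using cw that unfolding closed_walk_def by blast
    have dst: "dir_single_transition H eps p" if "p \<in> set W" for p
      using cw that unfolding closed_walk_def by blast
    have "fW W \<in> walk_edges W" using eW by blast
    then obtain t0 where t0: "t0 \<in> set (walk_travs W)" "fW W = {fst t0, snd t0}"
      unfolding walk_edges_def by blast
    have eE: "fW W \<in> E" using trE[OF t0(1)] t0(2) by simp
    then have "card (fW W) = 2" using G.E2 by blast
    then obtain p q where pq: "fW W = {p,q}" "p \<noteq> q" using card_2_iff[of "fW W"] by blast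
    have pqH: "p \<in> H" "q \<in> H" using G.EH[OF eE] pq by auto
    have "distinct (map fst (walk_travs W))"
      unfolding map_fst_walk_travs by (rule distinct_wh_snd[OF dW])
    then have dtr: "distinct (walk_travs W)" by (simp add: distinct_map)
    let ?xs = "walk_travs W"
    define a where "a = (if (p,q) \<in> set ?xs \<and> (q,p) \<notin> set ?xs then q else p)"
    define b where "b = (if (p,q) \<in> set ?xs \<and> (q,p) \<notin> set ?xs then p else if (q,p) \<in> set ?xs \<and> (p,q) \<notin> set ?xs then q else p)"
    have aH: "a \<in> H" and bH: "b \<in> H" unfolding a_def b_def using pqH by auto
    have "\<forall>c \<in> tch_edges V H eps P.
      CM_touch tlD P W c = dl c * (of_bool (colv eps c \<in> A a) - of_bool (colv eps c \<in> A b))"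
    proof
      fix c assume c: "c \<in> tch_edges V H eps P"
      obtain s1 s2 where s: "c = {s1,s2}" "s1 \<in> tch_halfedges P" "s2 \<in> tch_halfedges P" "s1 \<inter> s2 = {}"
        "s1 \<noteq> {}" "colv eps c \<in> V" "s1 \<union> s2 = {h\<in>H. eps h = colv eps c}"
        using col[OF cp c] by blast
      define v where "v = colv eps c"
      define f where "f = (\<lambda>h. of_bool (v \<in> A h) :: int)"
      have pin: "pst P h = s1 \<or> pst P h = s2" if "h \<in> H" "eps h = v" for h
      proof -
        have "h \<in> s1 \<or> h \<in> s2" using s(7) that unfolding v_def by blast
        then show ?thesis using pst_uniq[OF cp that(1)] s(2,3) by blast
      qed
      have hps: "h \<in> pst P h" if "h \<in> H" for h using pst1[OF cp that] by blast
      have tl: "tlD c = s1 \<or> tlD c = s2" using dv c s(1) unfolding directed_version_def by blast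
      have lo: "lo v = s1 \<or> lo v = s2"
      proof -
        obtain h0 where "h0 \<in> s1" using s(5) by blast
        then have "h0 \<in> H" "eps h0 = v" using s(7) unfolding v_def by auto
        then obtain y where y: "y \<in> H" "eps y = v" "lo v = pst P y" using lov s(6) unfolding v_def by blast
        then show ?thesis using pin[OF y(1) y(2)] by simp
      qed
      have vBv: "v \<notin> Base v" using vB s(6) unfolding v_def by blast
      have step: "(of_bool (pst P (fst pp) \<noteq> pst P (snd pp) \<and> {pst P (fst pp), pst P (snd pp)} = c \<and> pst P (fst pp) = tlD c) :: int)
         - of_bool (pst P (fst pp) \<noteq> pst P (snd pp) \<and> {pst P (fst pp), pst P (snd pp)} = c \<and> pst P (snd pp) = tlD c)
         = dl c * (f (fst pp) - f (snd pp))" if pp: "pp \<in> set W" for pp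
      proof -
        have hh: "fst pp \<in> H" "snd pp \<in> H" "eps (fst pp) = eps (snd pp)"
          using dst[OF pp] unfolding dir_single_transition_def by auto
        have dlc: "dl c = (if tlD c = lo v then -1 else 1)" unfolding dl_def v_def by simp
        show ?thesis unfolding dlc f_def AH[OF hh(1)] AH[OF hh(2)]
          by (rule K[where c=c and sa=s1 and sb=s2 and H=H and eps=eps and v=v and ps="pst P"
                and tlc="tlD c" and lo=lo and Base=Base and h="fst pp" and h'="snd pp",
                OF s(1) s(4) s(5) s(7)[folded v_def] pin hps tl lo vBv hh])
      qed
      have "CM_touch tlD P W c = sum_list (map (\<lambda>pp. dl c * (f (fst pp) - f (snd pp))) W)"
        unfolding CM_sum by (rule arg_cong[where f=sum_list], rule map_cong[OF refl], rule step)
      also have "\<dots> = dl c * sum_list (map (\<lambda>pp. f (fst pp) - f (snd pp)) W)"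
        by (simp add: sum_list_const_mult)
      also have "sum_list (map (\<lambda>pp. f (fst pp) - f (snd pp)) W) = sum_list (map (\<lambda>t. f (snd t) - f (fst t)) ?xs)"
        by (rule telescope)
      also have "\<dots> = f a - f b" unfolding a_def b_def
      proof (rule sum_travs[OF dtr pq(2)])
        fix t assume t: "t \<in> set ?xs" "t \<noteq> (p,q)" "t \<noteq> (q,p)"
        have te: "{fst t, snd t} \<in> walk_edges W" using t(1) unfolding walk_edges_def by blast
        obtain x y where xy: "t = (x,y)" by (cases t)
        have ne: "{fst t, snd t} \<noteq> {p,q}"
        proof
          assume "{fst t, snd t} = {p,q}"
          then have "{x,y} = {p,q}" using xy by simp
          then have "(x = p \<and> y = q) \<or> (x = q \<and> y = p)" by (simp add: doubleton_eq_iff)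
          then show False using t(2) t(3) xy by blast
        qed
        have tT: "{fst t, snd t} \<in> T"
        proof (rule ccontr)
          assume "{fst t, snd t} \<notin> T"
          then have "{fst t, snd t} \<in> walk_edges W - T" using te by simp
          then have "{fst t, snd t} = fW W" using eW by simp
          then show False using ne pq(1) by simp
        qed
        have tH: "fst t \<in> H" "snd t \<in> H" using G.EH[OF trE[OF t(1)]] by auto
        have "G.Aof (pst P) Base lo (fst t) = G.Aof (pst P) Base lo (snd t)"
          using cst[rule_format, OF tH(1) tH(2) tT] .
        then show "f (snd t) = f (fst t)" unfolding f_def A_def using tH by simp
      qed
      finally show "CM_touch tlD P W c = dl c * (of_bool (colv eps c \<in> A a) - of_bool (colv eps c \<in> A b))"
        unfolding f_def v_def .
    qed
    then show ?thesis using aH bH by blast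
  qed
  have "\<forall>W\<in>B. \<exists>ab. fst ab \<in> H \<and> snd ab \<in> H \<and> (\<forall>c \<in> tch_edges V H eps P.
      CM_touch tlD P W c = dl c * (of_bool (colv eps c \<in> A (fst ab)) - of_bool (colv eps c \<in> A (snd ab))))"
  proof
    fix W assume "W \<in> B"
    from rowform[OF this] obtain a b where "a \<in> H" "b \<in> H" "\<forall>c \<in> tch_edges V H eps P.
      CM_touch tlD P W c = dl c * (of_bool (colv eps c \<in> A a) - of_bool (colv eps c \<in> A b))" by blast
    then show "\<exists>ab. fst ab \<in> H \<and> snd ab \<in> H \<and> (\<forall>c \<in> tch_edges V H eps P.
      CM_touch tlD P W c = dl c * (of_bool (colv eps c \<in> A (fst ab)) - of_bool (colv eps c \<in> A (snd ab))))"
      by (intro exI[of _ "(a,b)"]) simp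
  qed
  then have "\<exists>ab. \<forall>W\<in>B. fst (ab W) \<in> H \<and> snd (ab W) \<in> H \<and> (\<forall>c \<in> tch_edges V H eps P.
      CM_touch tlD P W c = dl c * (of_bool (colv eps c \<in> A (fst (ab W))) - of_bool (colv eps c \<in> A (snd (ab W)))))"
    by (rule bchoice)
  then obtain ab where ab: "\<forall>W\<in>B. fst (ab W) \<in> H \<and> snd (ab W) \<in> H \<and> (\<forall>c \<in> tch_edges V H eps P.
      CM_touch tlD P W c = dl c * (of_bool (colv eps c \<in> A (fst (ab W))) - of_bool (colv eps c \<in> A (snd (ab W)))))"
    by (elim exE)
  have abW: "CM_touch tlD P W c = dl c * (of_bool (colv eps c \<in> A (fst (ab W))) - of_bool (colv eps c \<in> A (snd (ab W))))"
    if "W \<in> B" "c \<in> tch_edges V H eps P" for W c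
    using ab that by blast
  have rank: "rk c < rk c'" if "c \<in> A x" "c \<in> A y" "c' \<in> A x" "c' \<notin> A y" for x y c c'
  proof -
    have xH: "x \<in> H" and yH: "y \<in> H" using that unfolding A_def by (auto split: if_splits)
    have Ax: "A x = G.Aof (pst P) Base lo x" and Ay: "A y = G.Aof (pst P) Base lo y"
      using xH yH unfolding A_def by auto
    have "\<forall>c c'. c \<in> G.Aof (pst P) Base lo x \<longrightarrow> c \<in> G.Aof (pst P) Base lo y \<longrightarrow>
       c' \<in> G.Aof (pst P) Base lo x \<longrightarrow> c' \<notin> G.Aof (pst P) Base lo y \<longrightarrow> rk c < rk c'"
      using rc xH yH G.epsV[OF xH] G.epsV[OF yH] unfolding G.rankc_def by blast
    then show ?thesis using that unfolding Ax Ay by blast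
  qed
  show ?thesis unfolding totally_unimodular_def
  proof (intro allI impI)
    fix k and f :: "nat \<Rightarrow> ('h \<times> 'h) list" and g :: "nat \<Rightarrow> 'h set set"
    assume f: "f ` {..<k} \<subseteq> B" and "inj_on f {..<k}" and g: "g ` {..<k} \<subseteq> tch_edges V H eps P" and "inj_on g {..<k}"
    have eq: "mat k k (\<lambda>(i, j). CM_touch tlD P (f i) (g j)) =
      mat k k (\<lambda>(i,j). (dl \<circ> g) j * (of_bool ((colv eps \<circ> g) j \<in> A ((fst \<circ> ab \<circ> f) i))
          - of_bool ((colv eps \<circ> g) j \<in> A ((snd \<circ> ab \<circ> f) i))))"
    proof (rule eq_matI)
      fix i j assume i: "i < dim_row (mat k k (\<lambda>(i,j). (dl \<circ> g) j * (of_bool ((colv eps \<circ> g) j \<in> A ((fst \<circ> ab \<circ> f) i))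
          - of_bool ((colv eps \<circ> g) j \<in> A ((snd \<circ> ab \<circ> f) i)))))"
        and j: "j < dim_col (mat k k (\<lambda>(i,j). (dl \<circ> g) j * (of_bool ((colv eps \<circ> g) j \<in> A ((fst \<circ> ab \<circ> f) i))
          - of_bool ((colv eps \<circ> g) j \<in> A ((snd \<circ> ab \<circ> f) i)))))"
      have ik: "i < k" and jk: "j < k" using i j by auto
      have fi: "f i \<in> B" using f ik by blast
      have gj: "g j \<in> tch_edges V H eps P" using g jk by blast
      show "mat k k (\<lambda>(i, j). CM_touch tlD P (f i) (g j)) $$ (i, j) =
        mat k k (\<lambda>(i,j). (dl \<circ> g) j * (of_bool ((colv eps \<circ> g) j \<in> A ((fst \<circ> ab \<circ> f) i))
          - of_bool ((colv eps \<circ> g) j \<in> A ((snd \<circ> ab \<circ> f) i)))) $$ (i, j)"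
        using ik jk abW[OF fi gj] by simp
    qed auto
    have d: "\<forall>j. (dl \<circ> g) j \<in> {1, -1}" unfolding dl_def by auto
    show "det (mat k k (\<lambda>(i, j). CM_touch tlD P (f i) (g j))) \<in> {- 1, 0, 1}"
      unfolding eq by (rule TU_abs[OF rank d])
  qed
qed

end
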